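(* The structure $\mathcal{W}(I)$ is positive-model-complete in the signature $\{\cup,\cap,\bot,c_0,\min,\max,\mathrm{ips}\}$. That is, every first-order formula in this signature is equivalent in $\mathcal{W}(I)$ to a positive existential formula.
   Context: Let $I$ be a dense linear order with left endpoint $0$ and no right endpoint. $\mathcal{W}(I)$ is the structure whose universe is the set of finite subsets of $I$, interpreted as follows. - $\cup$ and $\cap$ are union and intersection. - $\bot$ is $\emptyset$, and $c_0$ is $\{0\}$. - $\min$ and $\max$ send a nonempty finite set to the singleton of its minimum, respectively maximum, and both fix $\emptyset$. - $\mathrm{ips}(A,B)=\{i\in A: s_A(i)\in B\}$, where $s_A$ is the successor function of the finite linear order $A$. A positive existential formula is one built from atomic formulas using only $\wedge$, $\vee$ and $\exists$. *)

theory Defs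
  imports Main
begin

text \<open>The structure W(I): universe = finite subsets of a dense linear order I with
least element 0 (here: bot) and no greatest element.  Elements are represented as
sets of type 'a set; quantifiers and assignments range over finite sets only.\<close>

definition set_min :: "'a::linorder set \<Rightarrow> 'a set" where
  "set_min A = (if A = {} then {} else {Min A})"

definition set_max :: "'a::linorder set \<Rightarrow> 'a set" where
  "set_max A = (if A = {} then {} else {Max A})"

text \<open>successor of i in the finite linear order A (only meaningful if one exists)\<close>
definition succ_in :: "'a::linorder set \<Rightarrow> 'a \<Rightarrow> 'a" where
  "succ_in A i = Min {j \<in> A. i < j}"

definition ips :: "'a::linorder set \<Rightarrow> 'a set \<Rightarrow> 'a set" where
  "ips A B = {i \<in> A. (\<exists>j\<in>A. i < j) \<and> succ_in A i \<in> B}"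

datatype tm =
    TVar nat
  | TUn tm tm
  | TInt tm tm
  | TBot
  | TC0
  | TMin tm
  | TMax tm
  | TIps tm tm

datatype fm =
    FEq tm tm
  | FNot fm
  | FConj fm fm
  | FDisj fm fm
  | FImp fm fm
  | FEx nat fm
  | FAll nat fm

fun eval_tm :: "(nat \<Rightarrow> 'a::{linorder,order_bot} set) \<Rightarrow> tm \<Rightarrow> 'a set" where
  "eval_tm \<sigma> (TVar n) = \<sigma> n"
| "eval_tm \<sigma> (TUn s t) = eval_tm \<sigma> s \<union> eval_tm \<sigma> t"
| "eval_tm \<sigma> (TInt s t) = eval_tm \<sigma> s \<inter> eval_tm \<sigma> t"
| "eval_tm \<sigma> TBot = {}"
| "eval_tm \<sigma> TC0 = {bot}"
| "eval_tm \<sigma> (TMin t) = set_min (eval_tm \<sigma> t)"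
| "eval_tm \<sigma> (TMax t) = set_max (eval_tm \<sigma> t)"
| "eval_tm \<sigma> (TIps s t) = ips (eval_tm \<sigma> s) (eval_tm \<sigma> t)"

fun holds :: "(nat \<Rightarrow> 'a::{linorder,order_bot} set) \<Rightarrow> fm \<Rightarrow> bool" where
  "holds \<sigma> (FEq s t) = (eval_tm \<sigma> s = eval_tm \<sigma> t)"
| "holds \<sigma> (FNot f) = (\<not> holds \<sigma> f)"
| "holds \<sigma> (FConj f g) = (holds \<sigma> f \<and> holds \<sigma> g)"
| "holds \<sigma> (FDisj f g) = (holds \<sigma> f \<or> holds \<sigma> g)"
| "holds \<sigma> (FImp f g) = (holds \<sigma> f \<longrightarrow> holds \<sigma> g)"
| "holds \<sigma> (FEx x f) = (\<exists>A. finite A \<and> holds (\<sigma>(x := A)) f)"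
| "holds \<sigma> (FAll x f) = (\<forall>A. finite A \<longrightarrow> holds (\<sigma>(x := A)) f)"

fun vars_tm :: "tm \<Rightarrow> nat set" where
  "vars_tm (TVar n) = {n}"
| "vars_tm (TUn s t) = vars_tm s \<union> vars_tm t"
| "vars_tm (TInt s t) = vars_tm s \<union> vars_tm t"
| "vars_tm TBot = {}"
| "vars_tm TC0 = {}"
| "vars_tm (TMin t) = vars_tm t"
| "vars_tm (TMax t) = vars_tm t"
| "vars_tm (TIps s t) = vars_tm s \<union> vars_tm t"

fun free_vars :: "fm \<Rightarrow> nat set" where
  "free_vars (FEq s t) = vars_tm s \<union> vars_tm t"
| "free_vars (FNot f) = free_vars f"
| "free_vars (FConj f g) = free_vars f \<union> free_vars g"
| "free_vars (FDisj f g) = free_vars f \<union> free_vars g"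
| "free_vars (FImp f g) = free_vars f \<union> free_vars g"
| "free_vars (FEx x f) = free_vars f - {x}"
| "free_vars (FAll x f) = free_vars f - {x}"

fun pos_ex :: "fm \<Rightarrow> bool" where
  "pos_ex (FEq s t) = True"
| "pos_ex (FNot f) = False"
| "pos_ex (FConj f g) = (pos_ex f \<and> pos_ex g)"
| "pos_ex (FDisj f g) = (pos_ex f \<and> pos_ex g)"
| "pos_ex (FImp f g) = False"
| "pos_ex (FEx x f) = pos_ex f"
| "pos_ex (FAll x f) = False"

end

theory Submission
  imports Defs
begin


definition quot :: "'c list \<Rightarrow> 'c list set \<Rightarrow> 'c list set" where
  "quot u L = {w. u @ w \<in> L}"

definition regular :: "'c list set \<Rightarrow> bool" where
  "regular L \<longleftrightarrow> finite (range (\<lambda>u. quot u L))"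

lemma quot_append: "quot (u @ v) L = quot v (quot u L)"
  by (simp add: quot_def)

lemma regular_compl: "regular L \<Longrightarrow> regular (- L)"
proof -
  assume "regular L"
  have "range (\<lambda>u. quot u (-L)) = uminus ` range (\<lambda>u. quot u L)"
    by (auto simp: quot_def)
  thus ?thesis using \<open>regular L\<close> unfolding regular_def by simp
qed

lemma regular_Int: "regular L \<Longrightarrow> regular M \<Longrightarrow> regular (L \<inter> M)"
proof -
  assume a: "regular L" "regular M"
  have "range (\<lambda>u. quot u (L \<inter> M)) \<subseteq> (\<lambda>(A,B). A \<inter> B) ` (range (\<lambda>u. quot u L) \<times> range (\<lambda>u. quot u M))"
    by (auto simp: quot_def)
  thus ?thesis using a unfolding regular_def by (meson finite_SigmaI finite_imageI finite_subset)
qed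

lemma regular_Un: "regular L \<Longrightarrow> regular M \<Longrightarrow> regular (L \<union> M)"
proof -
  assume a: "regular L" "regular M"
  have "range (\<lambda>u. quot u (L \<union> M)) \<subseteq> (\<lambda>(A,B). A \<union> B) ` (range (\<lambda>u. quot u L) \<times> range (\<lambda>u. quot u M))"
  proof
    fix K assume "K \<in> range (\<lambda>u. quot u (L \<union> M))"
    then obtain u where "K = quot u (L \<union> M)" by auto
    hence "K = (\<lambda>(A,B). A \<union> B) (quot u L, quot u M)" by (auto simp: quot_def)
    thus "K \<in> (\<lambda>(A,B). A \<union> B) ` (range (\<lambda>u. quot u L) \<times> range (\<lambda>u. quot u M))" by blast
  qed
  thus ?thesis using a unfolding regular_def by (meson finite_SigmaI finite_imageI finite_subset)
qed

lemma regular_invhom: "regular L \<Longrightarrow> regular {w. concat (map h w) \<in> L}"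
proof -
  assume a: "regular L"
  have "range (\<lambda>u. quot u {w. concat (map h w) \<in> L}) \<subseteq> (\<lambda>K. {w. concat (map h w) \<in> K}) ` range (\<lambda>u. quot u L)"
  proof
    fix K assume "K \<in> range (\<lambda>u. quot u {w. concat (map h w) \<in> L})"
    then obtain u where "K = quot u {w. concat (map h w) \<in> L}" by auto
    hence "K = {w. concat (map h w) \<in> quot (concat (map h u)) L}" by (auto simp: quot_def)
    thus "K \<in> (\<lambda>K. {w. concat (map h w) \<in> K}) ` range (\<lambda>u. quot u L)" by auto
  qed
  thus ?thesis using a unfolding regular_def by (meson finite_imageI finite_subset)
qed

lemma hom_split:
  assumes "\<forall>a. length (h a) \<le> 1"
  shows "concat (map h m) = u @ w \<Longrightarrow> \<exists>m1 m2. m = m1 @ m2 \<and> concat (map h m1) = u \<and> concat (map h m2) = w"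
proof (induction m arbitrary: u)
  case Nil
  then show ?case by auto
next
  case (Cons a m)
  show ?case
  proof (cases u)
    case Nil
    then show ?thesis using Cons.prems by (rule_tac x="[]" in exI, rule_tac x="a # m" in exI) simp
  next
    case (Cons c u')
    show ?thesis
    proof (cases "h a")
      case Nil
      then obtain m1 m2 where "m = m1 @ m2" "concat (map h m1) = u" "concat (map h m2) = w"
        using Cons.IH[of u] Cons.prems by auto
      then show ?thesis using Nil by (rule_tac x="a # m1" in exI, rule_tac x=m2 in exI) simp
    next
      case (Cons d r)
      have "r = []" using assms[rule_format, of a] Cons by simp
      with Cons \<open>u = c # u'\<close> Cons.prems have "d = c" "concat (map h m) = u' @ w" by auto
      then obtain m1 m2 where "m = m1 @ m2" "concat (map h m1) = u'" "concat (map h m2) = w"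
        using Cons.IH[of u'] by auto
      then show ?thesis using Cons \<open>r = []\<close> \<open>d = c\<close> \<open>u = c # u'\<close> by (rule_tac x="a # m1" in exI, rule_tac x=m2 in exI) simp
    qed
  qed
qed

lemma regular_hom_image:
  assumes h: "\<forall>a. length (h a) \<le> 1" and a: "regular L"
  shows "regular ((\<lambda>w. concat (map h w)) ` L)"
proof -
  let ?H = "\<lambda>w. concat (map h w)"
  have "range (\<lambda>u. quot u (?H ` L)) \<subseteq> (\<lambda>S. \<Union>K\<in>S. ?H ` K) ` Pow (range (\<lambda>u. quot u L))"
  proof
    fix K assume "K \<in> range (\<lambda>u. quot u (?H ` L))"
    then obtain u where K: "K = quot u (?H ` L)" by auto
    have "K = (\<Union>K\<in>{quot m L |m. ?H m = u}. ?H ` K)"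
    proof
      show "K \<subseteq> (\<Union>K\<in>{quot m L |m. ?H m = u}. ?H ` K)"
      proof
        fix w assume "w \<in> K"
        then obtain m0 where "m0 \<in> L" "?H m0 = u @ w" using K by (auto simp: quot_def)
        then obtain m1 m2 where "m0 = m1 @ m2" "?H m1 = u" "?H m2 = w" using hom_split[OF h] by metis
        thus "w \<in> (\<Union>K\<in>{quot m L |m. ?H m = u}. ?H ` K)" using \<open>m0 \<in> L\<close>
          by (auto simp: quot_def intro!: exI[of _ m1])
      qed
    next
      show "(\<Union>K\<in>{quot m L |m. ?H m = u}. ?H ` K) \<subseteq> K"
    proof
      fix w assume "w \<in> (\<Union>K\<in>{quot m L |m. ?H m = u}. ?H ` K)"
      then obtain m w' where "?H m = u" "m @ w' \<in> L" "w = ?H w'" by (auto simp: quot_def)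
      hence "u @ w = ?H (m @ w')" by simp
      moreover have "?H (m @ w') \<in> ?H ` L" using \<open>m @ w' \<in> L\<close> by blast
      ultimately show "w \<in> K" using K by (auto simp: quot_def)
    qed
    qed
    moreover have "{quot m L |m. ?H m = u} \<in> Pow (range (\<lambda>u. quot u L))" by auto
    ultimately show "K \<in> (\<lambda>S. \<Union>K\<in>S. ?H ` K) ` Pow (range (\<lambda>u. quot u L))" by blast
  qed
  thus ?thesis using a unfolding regular_def by (meson finite_Pow_iff finite_imageI finite_subset)
qed

lemma regular_dfa:
  assumes "finite S" "q0 \<in> S" "\<And>q a. q \<in> S \<Longrightarrow> \<delta> q a \<in> S"
  shows "regular {w. acc (foldl \<delta> q0 w)}"
proof -
  have inS: "q \<in> S \<Longrightarrow> foldl \<delta> q u \<in> S" for q u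
    by (induction u arbitrary: q) (auto simp: assms(3))
  have "range (\<lambda>u. quot u {w. acc (foldl \<delta> q0 w)}) \<subseteq> (\<lambda>q. {w. acc (foldl \<delta> q w)}) ` S"
    using inS[OF assms(2)] by (auto simp: quot_def)
  thus ?thesis using assms(1) unfolding regular_def by (meson finite_imageI finite_subset)
qed



type_synonym letter = "bool \<times> nat set"

definition Uset :: "nat set \<Rightarrow> (nat \<Rightarrow> 'a set) \<Rightarrow> 'a set" where
  "Uset V \<sigma> = (\<Union>x\<in>V. \<sigma> x)"

definition lett :: "nat set \<Rightarrow> (nat \<Rightarrow> 'a::{linorder,order_bot} set) \<Rightarrow> 'a \<Rightarrow> letter" where
  "lett V \<sigma> p = (p = bot, {x\<in>V. p \<in> \<sigma> x})"

definition word :: "nat set \<Rightarrow> (nat \<Rightarrow> 'a::{linorder,order_bot} set) \<Rightarrow> letter list" where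
  "word V \<sigma> = map (lett V \<sigma>) (sorted_list_of_set (Uset V \<sigma>))"

definition fin :: "(nat \<Rightarrow> 'a set) \<Rightarrow> bool" where
  "fin \<sigma> \<longleftrightarrow> (\<forall>n. finite (\<sigma> n))"

definition Reg :: "nat set \<Rightarrow> ((nat \<Rightarrow> 'a::{linorder,order_bot} set) \<Rightarrow> bool) \<Rightarrow> bool" where
  "Reg V P \<longleftrightarrow> finite V \<and> (\<exists>L. regular L \<and> (\<forall>\<sigma>. fin \<sigma> \<longrightarrow> (P \<sigma> \<longleftrightarrow> word V \<sigma> \<in> L)))"

definition restr :: "nat set \<Rightarrow> letter list \<Rightarrow> letter list" where
  "restr V w = concat (map (\<lambda>a. if snd a \<inter> V = {} then [] else [(fst a, snd a \<inter> V)]) w)"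

lemma sls_eq: "sorted_wrt (<) l \<Longrightarrow> sorted_list_of_set (set l) = (l::'a::linorder list)"
  by (metis sorted_list_of_set.idem_if_sorted_distinct strict_sorted_iff subset_UNIV)

lemma finite_Uset: "finite V \<Longrightarrow> fin \<sigma> \<Longrightarrow> finite (Uset V \<sigma>)"
  by (auto simp: Uset_def fin_def)

lemma word_cong: "(\<And>x. x \<in> V \<Longrightarrow> \<sigma> x = \<sigma>' x) \<Longrightarrow> word V \<sigma> = word V \<sigma>'"
proof -
  assume a: "\<And>x. x \<in> V \<Longrightarrow> \<sigma> x = \<sigma>' x"
  have "Uset V \<sigma> = Uset V \<sigma>'" using a by (auto simp: Uset_def)
  moreover have "lett V \<sigma> = lett V \<sigma>'" using a by (auto simp: lett_def fun_eq_iff)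
  ultimately show ?thesis by (simp add: word_def)
qed

lemma concat_map_filter:
  "concat (map (\<lambda>p. if P p then [] else [f p]) ps) = map f (filter (\<lambda>p. \<not> P p) ps)"
  by (induction ps) auto

lemma sorted_list_of_set_subset:
  assumes "finite B" "A \<subseteq> B"
  shows "sorted_list_of_set A = filter (\<lambda>p. p \<in> A) (sorted_list_of_set B)"
proof -
  have "sorted_wrt (<) (filter (\<lambda>p. p \<in> A) (sorted_list_of_set B))"
    by (simp add: sorted_wrt_filter)
  moreover have "set (filter (\<lambda>p. p \<in> A) (sorted_list_of_set B)) = A" using assms by auto
  ultimately show ?thesis using sls_eq by metis
qed

lemma restr_word:
  assumes "V \<subseteq> W" "finite W" "fin \<sigma>"
  shows "restr V (word W \<sigma>) = word V \<sigma>"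
proof -
  have fW: "finite (Uset W \<sigma>)" using assms finite_Uset by blast
  have sub: "Uset V \<sigma> \<subseteq> Uset W \<sigma>" using assms by (auto simp: Uset_def)
  have e1: "snd (lett W \<sigma> p) \<inter> V = {} \<longleftrightarrow> p \<notin> Uset V \<sigma>" for p
    using assms(1) by (auto simp: lett_def Uset_def)
  have e3: "(\<lambda>a. if snd a \<inter> V = {} then [] else [(fst a, snd a \<inter> V)]) (lett W \<sigma> p) = (if p \<notin> Uset V \<sigma> then [] else [lett V \<sigma> p])" for p
    using assms(1) by (auto simp: lett_def Uset_def)
  have "restr V (word W \<sigma>) = concat (map (\<lambda>p. if p \<notin> Uset V \<sigma> then [] else [lett V \<sigma> p]) (sorted_list_of_set (Uset W \<sigma>)))"
    unfolding restr_def word_def map_map comp_def e3 ..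
  also have "\<dots> = map (lett V \<sigma>) (filter (\<lambda>p. p \<in> Uset V \<sigma>) (sorted_list_of_set (Uset W \<sigma>)))"
    by (subst concat_map_filter) simp
  also have "\<dots> = word V \<sigma>" unfolding word_def using sorted_list_of_set_subset[OF fW sub] by simp
  finally show ?thesis .
qed

lemma Reg_cong: "Reg V P \<Longrightarrow> (\<And>\<sigma>. fin \<sigma> \<Longrightarrow> P \<sigma> \<longleftrightarrow> Q \<sigma>) \<Longrightarrow> Reg V Q"
  unfolding Reg_def by metis

lemma Reg_mono: assumes "Reg V P" "V \<subseteq> W" "finite W" shows "Reg W P"
proof -
  obtain L where L: "regular L" "\<And>\<sigma>. fin \<sigma> \<Longrightarrow> P \<sigma> \<longleftrightarrow> word V \<sigma> \<in> L" using assms(1) Reg_def by metis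
  let ?L = "{w. restr V w \<in> L}"
  have "regular ?L" unfolding restr_def by (rule regular_invhom[OF L(1)])
  moreover have "fin \<sigma> \<Longrightarrow> P \<sigma> \<longleftrightarrow> word W \<sigma> \<in> ?L" for \<sigma>
    using L(2)[of \<sigma>] restr_word[OF assms(2,3), of \<sigma>] by simp
  ultimately show ?thesis using assms(3) unfolding Reg_def by blast
qed

lemma Reg_not: "Reg V P \<Longrightarrow> Reg V (\<lambda>\<sigma>. \<not> P \<sigma>)"
proof -
  assume "Reg V P"
  then obtain L where L: "finite V" "regular L" "\<And>\<sigma>. fin \<sigma> \<Longrightarrow> P \<sigma> \<longleftrightarrow> word V \<sigma> \<in> L" using Reg_def by metis
  show ?thesis unfolding Reg_def using L regular_compl[OF L(2)] by (intro conjI exI[of _ "-L"]) auto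
qed

lemma Reg_conj: "Reg V P \<Longrightarrow> Reg V Q \<Longrightarrow> Reg V (\<lambda>\<sigma>. P \<sigma> \<and> Q \<sigma>)"
proof -
  assume "Reg V P" "Reg V Q"
  then obtain L M where L: "finite V" "regular L" "\<And>\<sigma>. fin \<sigma> \<Longrightarrow> P \<sigma> \<longleftrightarrow> word V \<sigma> \<in> L"
    and M: "regular M" "\<And>\<sigma>. fin \<sigma> \<Longrightarrow> Q \<sigma> \<longleftrightarrow> word V \<sigma> \<in> M" using Reg_def by metis
  show ?thesis unfolding Reg_def using L M regular_Int[OF L(2) M(1)] by (intro conjI exI[of _ "L \<inter> M"]) auto
qed

lemma Reg_disj: "Reg V P \<Longrightarrow> Reg V Q \<Longrightarrow> Reg V (\<lambda>\<sigma>. P \<sigma> \<or> Q \<sigma>)"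
proof -
  assume "Reg V P" "Reg V Q"
  then obtain L M where L: "finite V" "regular L" "\<And>\<sigma>. fin \<sigma> \<Longrightarrow> P \<sigma> \<longleftrightarrow> word V \<sigma> \<in> L"
    and M: "regular M" "\<And>\<sigma>. fin \<sigma> \<Longrightarrow> Q \<sigma> \<longleftrightarrow> word V \<sigma> \<in> M" using Reg_def by metis
  show ?thesis unfolding Reg_def using L M regular_Un[OF L(2) M(1)] by (intro conjI exI[of _ "L \<union> M"]) auto
qed

lemma Reg_conj2: "Reg V P \<Longrightarrow> Reg W Q \<Longrightarrow> Reg (V \<union> W) (\<lambda>\<sigma>. P \<sigma> \<and> Q \<sigma>)"
  by (rule Reg_conj; rule Reg_mono) (auto simp: Reg_def)

lemma Reg_disj2: "Reg V P \<Longrightarrow> Reg W Q \<Longrightarrow> Reg (V \<union> W) (\<lambda>\<sigma>. P \<sigma> \<or> Q \<sigma>)"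
  by (rule Reg_disj; rule Reg_mono) (auto simp: Reg_def)

lemma Reg_dep: "Reg V P \<Longrightarrow> fin \<sigma> \<Longrightarrow> fin \<sigma>' \<Longrightarrow> (\<And>x. x \<in> V \<Longrightarrow> \<sigma> x = \<sigma>' x) \<Longrightarrow> P \<sigma> = P \<sigma>'"
  unfolding Reg_def using word_cong by metis

lemma set_word: "set (word V \<sigma>) = lett V \<sigma> ` Uset V \<sigma>" if "finite V" "fin \<sigma>"
  using finite_Uset[OF that] by (simp add: word_def)

lemma Reg_all_letters: "finite V \<Longrightarrow> (\<And>\<sigma>. fin \<sigma> \<Longrightarrow> P \<sigma> \<longleftrightarrow> (\<forall>p\<in>Uset V \<sigma>. R (lett V \<sigma> p))) \<Longrightarrow> Reg V P"
proof -
  assume V: "finite V" and P: "\<And>\<sigma>. fin \<sigma> \<Longrightarrow> P \<sigma> \<longleftrightarrow> (\<forall>p\<in>Uset V \<sigma>. R (lett V \<sigma> p))"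
  have fold: "foldl (\<lambda>q a. q \<and> R a) q w = (q \<and> (\<forall>a\<in>set w. R a))" for q w
    by (induction w arbitrary: q) auto
  have "regular {w. id (foldl (\<lambda>q a. q \<and> R a) True w)}"
    by (rule regular_dfa[of UNIV]) auto
  moreover have "fin \<sigma> \<Longrightarrow> P \<sigma> \<longleftrightarrow> word V \<sigma> \<in> {w. id (foldl (\<lambda>q a. q \<and> R a) True w)}" for \<sigma>
    using P[of \<sigma>] set_word[OF V, of \<sigma>] by (simp add: fold)
  ultimately show ?thesis using V unfolding Reg_def by blast
qed

lemma Reg_ex_letter: "finite V \<Longrightarrow> (\<And>\<sigma>. fin \<sigma> \<Longrightarrow> P \<sigma> \<longleftrightarrow> (\<exists>p\<in>Uset V \<sigma>. R (lett V \<sigma> p))) \<Longrightarrow> Reg V P"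
proof -
  assume V: "finite V" and P: "\<And>\<sigma>. fin \<sigma> \<Longrightarrow> P \<sigma> \<longleftrightarrow> (\<exists>p\<in>Uset V \<sigma>. R (lett V \<sigma> p))"
  have fold: "foldl (\<lambda>q a. q \<or> R a) q w = (q \<or> (\<exists>a\<in>set w. R a))" for q w
    by (induction w arbitrary: q) auto
  have "regular {w. id (foldl (\<lambda>q a. q \<or> R a) False w)}"
    by (rule regular_dfa[of UNIV]) auto
  moreover have "fin \<sigma> \<Longrightarrow> P \<sigma> \<longleftrightarrow> word V \<sigma> \<in> {w. id (foldl (\<lambda>q a. q \<or> R a) False w)}" for \<sigma>
    using P[of \<sigma>] set_word[OF V, of \<sigma>] by (simp add: fold)
  ultimately show ?thesis using V unfolding Reg_def by blast
qed



definition good :: "nat set \<Rightarrow> letter \<Rightarrow> bool" where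
  "good V a \<longleftrightarrow> snd a \<noteq> {} \<and> snd a \<subseteq> V"

definition Valid :: "nat set \<Rightarrow> letter list set" where
  "Valid V = {w. w = [] \<or> (good V (hd w) \<and> (\<forall>a\<in>set (tl w). good V a \<and> \<not> fst a))}"

definition vdelta :: "nat set \<Rightarrow> nat \<Rightarrow> letter \<Rightarrow> nat" where
  "vdelta V s a = (if s = 0 then (if good V a then 1 else 2)
                   else if s = 1 then (if good V a \<and> \<not> fst a then 1 else 2) else 2)"

lemma vdelta_simps: "vdelta V 0 a = (if good V a then 1 else 2)"
  "vdelta V 1 a = (if good V a \<and> \<not> fst a then 1 else 2)" "vdelta V 2 a = 2"
  "vdelta V (Suc 0) a = (if good V a \<and> \<not> fst a then 1 else 2)"
  by (auto simp: vdelta_def)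

lemma regular_Valid: "regular (Valid V)"
proof -
  have f2: "foldl (vdelta V) 2 w = 2" for w by (induction w) (auto simp: vdelta_simps)
  have f1: "foldl (vdelta V) (Suc 0) w = (if \<forall>a\<in>set w. good V a \<and> \<not> fst a then Suc 0 else 2)" for w
    by (induction w) (auto simp: vdelta_simps f2)
  have "Valid V = {w. (\<lambda>s. s \<noteq> 2) (foldl (vdelta V) 0 w)}"
  proof (rule set_eqI)
    fix w show "w \<in> Valid V \<longleftrightarrow> w \<in> {w. (\<lambda>s. s \<noteq> 2) (foldl (vdelta V) 0 w)}"
      by (cases w) (auto simp: Valid_def vdelta_simps f1 f2)
  qed
  moreover have "regular {w. (\<lambda>s. s \<noteq> (2::nat)) (foldl (vdelta V) 0 w)}"
    by (rule regular_dfa[of "{0,1,2}"]) (auto simp: vdelta_def)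
  ultimately show ?thesis by simp
qed

lemma sorted_wrt_hd_less: "sorted_wrt (<) (p # ps) \<Longrightarrow> q \<in> set ps \<Longrightarrow> p < q"
  by simp

lemma word_valid:
  fixes \<sigma> :: "nat \<Rightarrow> 'a::{linorder,order_bot} set"
  assumes "finite V" "fin \<sigma>" shows "word V \<sigma> \<in> Valid V"
proof -
  let ?ps = "sorted_list_of_set (Uset V \<sigma>)"
  have fU: "finite (Uset V \<sigma>)" using assms finite_Uset by blast
  have s: "sorted_wrt (<) ?ps" by simp
  have g: "good V (b, {x\<in>V. p \<in> \<sigma> x})" if "p \<in> Uset V \<sigma>" for p b
    using that by (auto simp: good_def lett_def Uset_def)
  show ?thesis
  proof (cases ?ps)
    case Nil
    then show ?thesis by (simp add: word_def Valid_def)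
  next
    case (Cons p ps)
    have pU: "set (p # ps) = Uset V \<sigma>" using Cons fU by (metis set_sorted_list_of_set)
    have "q \<in> set ps \<Longrightarrow> q \<noteq> bot" for q
      using s Cons sorted_wrt_hd_less[of p ps q] by (metis bot.extremum_strict)
    then show ?thesis using Cons pU g by (auto simp: word_def Valid_def lett_def)
  qed
qed

lemma restr_Nil[simp]: "restr V [] = []"
  by (simp add: restr_def)

lemma restr_Cons: "restr V (a # w) = (if snd a \<inter> V = {} then [] else [(fst a, snd a \<inter> V)]) @ restr V w"
  by (simp add: restr_def)

lemma set_restr: "set (restr V w) \<subseteq> (\<lambda>a. (fst a, snd a \<inter> V)) ` set w"
  by (induction w) (auto simp: restr_Cons split: if_splits)

definition Rrel :: "nat set \<Rightarrow> 'a set \<Rightarrow> ('a \<Rightarrow> letter) \<Rightarrow> 'a::order_bot \<Rightarrow> letter \<Rightarrow> bool" where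
  "Rrel V' U g p a = (if snd a \<inter> V' = {} then p \<notin> U \<and> (p = bot \<longleftrightarrow> fst a) else g p = (fst a, snd a \<inter> V'))"

lemma fill:
  fixes us :: "'a::{dense_linorder,no_top,order_bot} list"
  assumes "\<forall>a\<in>set w. \<not> fst a" "sorted_wrt (<) us" "\<forall>u\<in>set us. lo < u"
    "\<forall>p. lo < p \<longrightarrow> (p \<in> U \<longleftrightarrow> p \<in> set us)" "restr V' w = map g us"
  shows "\<exists>ps. sorted_wrt (<) ps \<and> (\<forall>p\<in>set ps. lo < p) \<and> set us \<subseteq> set ps \<and> list_all2 (Rrel V' U g) ps w"
  using assms
proof (induction w arbitrary: us lo)
  case Nil
  then show ?case by (auto simp: restr_def)
next
  case (Cons a w)
  show ?case
  proof (cases "snd a \<inter> V' = {}")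
    case True
    hence rw: "restr V' w = map g us" using Cons.prems(5) by (simp add: restr_Cons)
    obtain z where z: "lo < z" "\<forall>u\<in>set us. z < u"
    proof (cases us)
      case Nil
      obtain z where "lo < z" using gt_ex by blast
      then show ?thesis using that Nil by auto
    next
      case (Cons u us')
      have "lo < u" using Cons.prems(3) \<open>us = u # us'\<close> by auto
      then obtain z where "lo < z" "z < u" using dense by blast
      moreover have "\<forall>v\<in>set us'. u < v" using Cons.prems(2) \<open>us = u # us'\<close> by auto
      ultimately show ?thesis using that \<open>us = u # us'\<close> by (metis dual_order.strict_trans set_ConsD)
    qed
    have "\<forall>p. z < p \<longrightarrow> (p \<in> U \<longleftrightarrow> p \<in> set us)" using Cons.prems(4) z(1) by auto
    then obtain ps where ps: "sorted_wrt (<) ps" "\<forall>p\<in>set ps. z < p" "set us \<subseteq> set ps" "list_all2 (Rrel V' U g) ps w"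
      using Cons.IH[of us z] Cons.prems(1,2) rw z(2) by auto
    have "z \<notin> U" using Cons.prems(4) z by auto
    moreover have "z \<noteq> bot" using z(1) by (metis bot.extremum_strict)
    ultimately have "Rrel V' U g z a" using True Cons.prems(1) by (simp add: Rrel_def)
    then show ?thesis using ps z by (intro exI[of _ "z # ps"]) auto
  next
    case False
    hence m: "map g us = (fst a, snd a \<inter> V') # restr V' w" using Cons.prems(5) by (simp add: restr_Cons)
    then obtain u us' where us: "us = u # us'" "g u = (fst a, snd a \<inter> V')" "restr V' w = map g us'"
      by (cases us) auto
    have "\<forall>v\<in>set us'. u < v" using Cons.prems(2) us by auto
    moreover have "\<forall>p. u < p \<longrightarrow> (p \<in> U \<longleftrightarrow> p \<in> set us')"
      using Cons.prems(3,4) us by auto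
    ultimately obtain ps where ps: "sorted_wrt (<) ps" "\<forall>p\<in>set ps. u < p" "set us' \<subseteq> set ps" "list_all2 (Rrel V' U g) ps w"
      using Cons.IH[of us' u] Cons.prems(1,2) us by auto
    have "Rrel V' U g u a" using False us by (simp add: Rrel_def)
    moreover have "lo < u" using Cons.prems(3) us by auto
    ultimately show ?thesis using ps us by (intro exI[of _ "u # ps"]) auto
  qed
qed



lemma restr_nofst: "\<forall>a\<in>set w. \<not> fst a \<Longrightarrow> b \<in> set (restr V w) \<Longrightarrow> \<not> fst b"
  using set_restr[of V w] by auto

lemma get_ps:
  fixes \<sigma> :: "nat \<Rightarrow> 'a::{dense_linorder,no_top,order_bot} set"
  assumes V: "finite V" and f: "fin \<sigma>" and w: "w \<in> Valid V"
    and r: "restr V' w = word V' \<sigma>" and V': "V' \<subseteq> V"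
  shows "\<exists>ps. sorted_wrt (<) ps \<and> Uset V' \<sigma> \<subseteq> set ps \<and> list_all2 (Rrel V' (Uset V' \<sigma>) (lett V' \<sigma>)) ps w"
proof -
  let ?U = "Uset V' \<sigma>" and ?g = "lett V' \<sigma>"
  define us where "us = sorted_list_of_set ?U"
  have fU: "finite ?U" using finite_Uset[OF finite_subset[OF V' V] f] .
  have us: "sorted_wrt (<) us" "set us = ?U" using fU by (auto simp: us_def)
  have m: "restr V' w = map ?g us" using r by (simp add: word_def us_def)
  have gbot: "fst (?g p) \<longleftrightarrow> p = bot" for p by (simp add: lett_def)
  have nobot: "\<forall>u\<in>set us. bot < u" if "\<forall>a\<in>set w'. \<not> fst a" "restr V' w' = map ?g us" for w'
  proof
    fix u assume "u \<in> set us"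
    hence "?g u \<in> set (restr V' w')" using that(2) by simp
    hence "u \<noteq> bot" using restr_nofst[OF that(1)] gbot by blast
    thus "bot < u" by (simp add: bot.not_eq_extremum)
  qed
  show ?thesis
  proof (cases "w \<noteq> [] \<and> fst (hd w)")
    case False
    hence nf: "\<forall>a\<in>set w. \<not> fst a" using w by (cases w) (auto simp: Valid_def)
    obtain ps where "sorted_wrt (<) ps" "set us \<subseteq> set ps" "list_all2 (Rrel V' ?U ?g) ps w"
      using fill[OF nf us(1) nobot[OF nf m], of ?U V' ?g] m us(2) by auto
    then show ?thesis using us(2) by auto
  next
    case True
    then obtain a w' where aw: "w = a # w'" "fst a" by (cases w) auto
    have nf: "\<forall>a\<in>set w'. \<not> fst a" using w aw by (auto simp: Valid_def)
    show ?thesis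
    proof (cases "snd a \<inter> V' = {}")
      case True
      hence m': "restr V' w' = map ?g us" using m aw by (simp add: restr_Cons)
      have "\<forall>p. bot < p \<longrightarrow> (p \<in> ?U \<longleftrightarrow> p \<in> set us)" using us by auto
      then obtain ps where ps: "sorted_wrt (<) ps" "\<forall>p\<in>set ps. bot < p" "set us \<subseteq> set ps" "list_all2 (Rrel V' ?U ?g) ps w'"
        using fill[OF nf us(1) nobot[OF nf m'], of ?U V' ?g] m' by auto
      have "bot \<notin> ?U" using nobot[OF nf m'] us(2) by auto
      hence "Rrel V' ?U ?g bot a" using True aw by (simp add: Rrel_def)
      then show ?thesis using ps aw us(2) by (intro exI[of _ "bot # ps"]) auto
    next
      case False
      hence "map ?g us = (fst a, snd a \<inter> V') # restr V' w'" using m aw by (simp add: restr_Cons)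
      then obtain u us' where uu: "us = u # us'" "?g u = (fst a, snd a \<inter> V')" "restr V' w' = map ?g us'"
        by (cases us) auto
      have ub: "u = bot" using uu(2) aw gbot by (metis fst_conv)
      have "\<forall>v\<in>set us'. bot < v" using us(1) uu ub by auto
      moreover have "?U = insert bot (set us')" using us(2) uu ub by simp
      hence "\<forall>p. bot < p \<longrightarrow> (p \<in> ?U \<longleftrightarrow> p \<in> set us')" by auto
      moreover have "sorted_wrt (<) us'" using us(1) uu by simp
      ultimately obtain ps where ps: "sorted_wrt (<) ps" "\<forall>p\<in>set ps. bot < p" "set us' \<subseteq> set ps" "list_all2 (Rrel V' ?U ?g) ps w'"
        using fill[OF nf, of us' bot ?U V' ?g] uu(3) by auto
      have "Rrel V' ?U ?g bot a" using False uu ub by (simp add: Rrel_def)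
      then show ?thesis using ps aw us(2) uu ub by (intro exI[of _ "bot # ps"]) auto
    qed
  qed
qed

lemma realize:
  fixes \<sigma> :: "nat \<Rightarrow> 'a::{dense_linorder,no_top,order_bot} set"
  assumes V: "finite V" and f: "fin \<sigma>" and w: "w \<in> Valid V"
    and r: "restr (V - {x}) w = word (V - {x}) \<sigma>"
  shows "\<exists>A. finite A \<and> word V (\<sigma>(x := A)) = w"
proof -
  let ?V' = "V - {x}"
  let ?U = "Uset ?V' \<sigma>" and ?g = "lett ?V' \<sigma>"
  obtain ps where ps: "sorted_wrt (<) ps" "?U \<subseteq> set ps" "list_all2 (Rrel ?V' ?U ?g) ps w"
    using get_ps[OF V f w r] by auto
  have len: "length ps = length w" using ps(3) list_all2_lengthD by blast
  have R: "i < length w \<Longrightarrow> Rrel ?V' ?U ?g (ps ! i) (w ! i)" for i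
    using ps(3) list_all2_nthD len by metis
  have dist: "distinct ps" using ps(1) strict_sorted_iff by blast
  have goodw: "i < length w \<Longrightarrow> good V (w ! i)" for i
    using w by (cases w) (auto simp: Valid_def nth_Cons split: nat.splits)
  define A where "A = {p. \<exists>i<length w. ps ! i = p \<and> x \<in> snd (w ! i)}"
  have fA: "finite A"
  proof -
    have "A \<subseteq> set ps" using len by (auto simp: A_def)
    thus ?thesis using finite_subset by blast
  qed
  have inA: "i < length w \<Longrightarrow> ps ! i \<in> A \<longleftrightarrow> x \<in> snd (w ! i)" for i
    using dist len by (auto simp: A_def nth_eq_iff_index_eq)
  let ?\<sigma> = "\<sigma>(x := A)"
  have Uo: "p \<in> ?U \<longleftrightarrow> snd (?g p) \<noteq> {}" for p by (auto simp: lett_def Uset_def)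
  have U: "Uset V ?\<sigma> = set ps"
  proof
    show "Uset V ?\<sigma> \<subseteq> set ps"
    proof
      fix p assume "p \<in> Uset V ?\<sigma>"
      then obtain y where "y \<in> V" "p \<in> ?\<sigma> y" unfolding Uset_def by blast
      show "p \<in> set ps"
      proof (cases "y = x")
        case True
        then show ?thesis using \<open>p \<in> ?\<sigma> y\<close> len by (auto simp: A_def)
      next
        case False
        then have "p \<in> ?U" using \<open>y \<in> V\<close> \<open>p \<in> ?\<sigma> y\<close> by (auto simp: Uset_def)
        then show ?thesis using ps(2) by auto
      qed
    qed
  next
    show "set ps \<subseteq> Uset V ?\<sigma>"
    proof
      fix p assume "p \<in> set ps"
      then obtain i where i: "i < length w" "ps ! i = p" using len by (metis in_set_conv_nth)
      show "p \<in> Uset V ?\<sigma>"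
      proof (cases "snd (w ! i) \<inter> ?V' = {}")
        case True
        hence "x \<in> snd (w ! i)" "x \<in> V" using goodw[OF i(1)] by (auto simp: good_def)
        hence "p \<in> A" using inA i by auto
        then show ?thesis using \<open>x \<in> V\<close> by (auto simp: Uset_def)
      next
        case False
        hence "?g p = (fst (w ! i), snd (w ! i) \<inter> ?V')" using R[OF i(1)] i(2) by (simp add: Rrel_def)
        hence "p \<in> ?U" using Uo False by simp
        then show ?thesis by (auto simp: Uset_def)
      qed
    qed
  qed
  have "word V ?\<sigma> = map (lett V ?\<sigma>) ps" unfolding word_def U using sls_eq[OF ps(1)] by simp
  also have "\<dots> = w"
  proof (rule nth_equalityI)
    show "length (map (lett V ?\<sigma>) ps) = length w" using len by simp
    fix i assume "i < length (map (lett V ?\<sigma>) ps)"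
    hence i: "i < length w" using len by simp
    let ?p = "ps ! i" and ?a = "w ! i"
    have gd: "snd ?a \<subseteq> V" using goodw[OF i] by (simp add: good_def)
    have S: "{y\<in>V. ?p \<in> ?\<sigma> y} = snd (?g ?p) \<union> (if x \<in> V \<and> x \<in> snd ?a then {x} else {})"
      using inA[OF i] by (auto simp: lett_def)
    have "lett V ?\<sigma> ?p = ?a"
    proof (cases "snd ?a \<inter> ?V' = {}")
      case True
      hence "?p \<notin> ?U" "(?p = bot) = fst ?a" using R[OF i] by (auto simp: Rrel_def)
      hence "snd (?g ?p) = {}" using Uo by blast
      moreover have "snd ?a = (if x \<in> V \<and> x \<in> snd ?a then {x} else {})" using True gd by auto
      ultimately have "{y\<in>V. ?p \<in> ?\<sigma> y} = snd ?a" using S by simp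
      thus ?thesis using \<open>(?p = bot) = fst ?a\<close> by (simp add: lett_def prod_eq_iff)
    next
      case False
      hence g: "?g ?p = (fst ?a, snd ?a \<inter> ?V')" using R[OF i] by (simp add: Rrel_def)
      hence "(?p = bot) = fst ?a" by (simp add: lett_def)
      moreover have "snd ?a = snd ?a \<inter> ?V' \<union> (if x \<in> V \<and> x \<in> snd ?a then {x} else {})" using gd by auto
      ultimately show ?thesis using S g by (simp add: lett_def prod_eq_iff)
    qed
    thus "map (lett V ?\<sigma>) ps ! i = w ! i" using i len by simp
  qed
  finally show ?thesis using fA by blast
qed

lemma fin_upd: "fin \<sigma> \<Longrightarrow> finite A \<Longrightarrow> fin (\<sigma>(x := A))"
  by (simp add: fin_def)

lemma Reg_ex:
  fixes P :: "(nat \<Rightarrow> 'a::{dense_linorder,no_top,order_bot} set) \<Rightarrow> bool"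
  assumes "Reg V P"
  shows "Reg (V - {x}) (\<lambda>\<sigma>. \<exists>A. finite A \<and> P (\<sigma>(x := A)))"
proof -
  obtain L where L: "finite V" "regular L" "\<And>\<sigma>. fin \<sigma> \<Longrightarrow> P \<sigma> \<longleftrightarrow> word V \<sigma> \<in> L"
    using assms Reg_def by metis
  let ?h = "\<lambda>a::letter. if snd a \<inter> (V - {x}) = {} then [] else [(fst a, snd a \<inter> (V - {x}))]"
  let ?L = "(\<lambda>w. concat (map ?h w)) ` (L \<inter> Valid V)"
  have "regular ?L" by (rule regular_hom_image) (auto intro: regular_Int L(2) regular_Valid)
  moreover have "(\<exists>A. finite A \<and> P (\<sigma>(x := A))) \<longleftrightarrow> word (V - {x}) \<sigma> \<in> ?L" if f: "fin \<sigma>" for \<sigma>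
  proof
    assume "\<exists>A. finite A \<and> P (\<sigma>(x := A))"
    then obtain A where A: "finite A" "P (\<sigma>(x := A))" by blast
    let ?w = "word V (\<sigma>(x := A))"
    have "?w \<in> L" using L(3) A fin_upd[OF f A(1)] by blast
    moreover have "?w \<in> Valid V" using word_valid[OF L(1) fin_upd[OF f A(1)]] .
    moreover have "restr (V - {x}) ?w = word (V - {x}) \<sigma>"
      using restr_word[of "V - {x}" V "\<sigma>(x := A)"] L(1) fin_upd[OF f A(1)] word_cong[of "V - {x}" "\<sigma>(x := A)" \<sigma>]
      by auto
    ultimately show "word (V - {x}) \<sigma> \<in> ?L" unfolding restr_def by force
  next
    assume "word (V - {x}) \<sigma> \<in> ?L"
    then obtain w where w: "w \<in> L" "w \<in> Valid V" "restr (V - {x}) w = word (V - {x}) \<sigma>"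
      unfolding restr_def by force
    obtain A where "finite A" "word V (\<sigma>(x := A)) = w" using realize[OF L(1) f w(2,3)] by blast
    thus "\<exists>A. finite A \<and> P (\<sigma>(x := A))" using L(3) fin_upd[OF f] w(1) by metis
  qed
  ultimately show ?thesis using L(1) unfolding Reg_def by blast
qed



lemma succ_in_mem: "finite X \<Longrightarrow> i \<in> X \<Longrightarrow> j \<in> X \<Longrightarrow> i < j \<Longrightarrow> succ_in X i \<in> X \<and> i < succ_in X i"
proof -
  assume a: "finite X" "i \<in> X" "j \<in> X" "i < j"
  have ne: "{j \<in> X. i < j} \<noteq> {}" using a by auto
  have "Min {j \<in> X. i < j} \<in> {j \<in> X. i < j}" using ne a(1) by (intro Min_in) auto
  thus ?thesis by (simp add: succ_in_def)
qed

lemma ips_insert_min: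
  fixes X :: "'a::linorder set"
  assumes "finite X" "\<forall>q\<in>X. p < q"
  shows "ips (insert p X) Y = (if X \<noteq> {} \<and> Min X \<in> Y then {p} else {}) \<union> ips X Y"
proof -
  have s1: "succ_in (insert p X) p = Min X" if "X \<noteq> {}"
  proof -
    have "{j \<in> insert p X. p < j} = X" using assms by auto
    thus ?thesis by (simp add: succ_in_def)
  qed
  have s2: "succ_in (insert p X) i = succ_in X i" if "i \<in> X" for i
  proof -
    have "{j \<in> insert p X. i < j} = {j \<in> X. i < j}" using assms that by auto
    thus ?thesis by (simp add: succ_in_def)
  qed
  have pn: "p \<notin> X" using assms by auto
  show ?thesis
  proof (rule set_eqI)
    fix i
    show "i \<in> ips (insert p X) Y \<longleftrightarrow> i \<in> (if X \<noteq> {} \<and> Min X \<in> Y then {p} else {}) \<union> ips X Y"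
    proof (cases "i = p")
      case True
      then show ?thesis using pn s1 assms by (cases "X = {}") (auto simp: ips_def)
    next
      case False
      then show ?thesis using pn s2 assms by (auto simp: ips_def)
    qed
  qed
qed

lemma ips_cong: "finite X \<Longrightarrow> (\<And>q. q \<in> X \<Longrightarrow> q \<in> Y \<longleftrightarrow> q \<in> Y') \<Longrightarrow> ips X Y = ips X Y'"
  unfolding ips_def using succ_in_mem by blast

lemma sing_un_eq: "p \<notin> A \<Longrightarrow> p \<notin> B \<Longrightarrow>
  ((if P then {p} else {}) \<union> A = (if Q then {p} else {}) \<union> B) \<longleftrightarrow> (P \<longleftrightarrow> Q) \<and> A = B"
  by (cases P; cases Q) auto

lemma ips_sub: "ips X Y \<subseteq> X" by (auto simp: ips_def)

definition idelta :: "nat \<Rightarrow> nat \<Rightarrow> nat \<Rightarrow> nat \<Rightarrow> letter \<Rightarrow> nat" where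
  "idelta x y z r a = (if x \<in> snd a then
      (if (r = 1 \<and> y \<notin> snd a) \<or> (r = 2 \<and> y \<in> snd a) \<or> r = 3 then 3 else if z \<in> snd a then 1 else 2)
     else (if z \<in> snd a \<or> r = 3 then 3 else r))"

definition Req :: "nat \<Rightarrow> 'a::linorder set \<Rightarrow> 'a set \<Rightarrow> bool" where
  "Req r X Y = (r = 0 \<or> (r = 1 \<and> X \<noteq> {} \<and> Min X \<in> Y) \<or> (r = 2 \<and> (X \<noteq> {} \<longrightarrow> Min X \<notin> Y)))"

lemma idelta3: "foldl (idelta x y z) 3 w = 3"
  by (induction w) (auto simp: idelta_def)

lemma ips_dfa:
  fixes \<sigma> :: "nat \<Rightarrow> 'a::{linorder,order_bot} set"
  assumes "x \<in> V" "y \<in> V" "z \<in> V" "sorted_wrt (<) ps" "r \<le> 2"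
  shows "(foldl (idelta x y z) r (map (lett V \<sigma>) ps) \<in> {0,2}) \<longleftrightarrow>
    Req r (\<sigma> x \<inter> set ps) (\<sigma> y \<inter> set ps) \<and> \<sigma> z \<inter> set ps = ips (\<sigma> x \<inter> set ps) (\<sigma> y \<inter> set ps)"
  using assms(4,5)
proof (induction ps arbitrary: r)
  case Nil
  then show ?case by (auto simp: Req_def ips_def)
next
  case (Cons p ps)
  let ?X = "\<sigma> x \<inter> set ps" and ?Y = "\<sigma> y \<inter> set ps" and ?Z = "\<sigma> z \<inter> set ps"
  let ?a = "lett V \<sigma> p"
  have lt: "\<forall>q\<in>set ps. p < q" using Cons.prems by simp
  have fX: "finite ?X" by simp
  have ltX: "\<forall>q\<in>?X. p < q" using lt by auto
  have mem: "v \<in> snd ?a \<longleftrightarrow> p \<in> \<sigma> v" if "v \<in> V" for v using that by (simp add: lett_def)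
  have IH: "r' \<le> 2 \<Longrightarrow> (foldl (idelta x y z) r' (map (lett V \<sigma>) ps) \<in> {0,2}) \<longleftrightarrow> Req r' ?X ?Y \<and> ?Z = ips ?X ?Y" for r'
    using Cons.IH Cons.prems(1) by simp
  have Yc: "ips ?X (\<sigma> y \<inter> set (p # ps)) = ips ?X ?Y"
    by (rule ips_cong[OF fX]) (use lt in auto)
  have MinY: "?X \<noteq> {} \<Longrightarrow> Min ?X \<in> \<sigma> y \<inter> set (p # ps) \<longleftrightarrow> Min ?X \<in> ?Y"
    using Min_in[OF fX] by auto
  have pZ: "p \<notin> ips ?X ?Y" using ips_sub[of ?X ?Y] lt by auto
  have pnZ: "p \<notin> ?Z" using lt by auto
  have st: "foldl (idelta x y z) r (map (lett V \<sigma>) (p # ps)) = foldl (idelta x y z) (idelta x y z r ?a) (map (lett V \<sigma>) ps)"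
    by simp
  show ?case
  proof (cases "p \<in> \<sigma> x")
    case True
    have Xe: "\<sigma> x \<inter> set (p # ps) = insert p ?X" using True by auto
    have MinX: "Min (insert p ?X) = p" using ltX fX by (metis Min_insert2 less_imp_le)
    have ipsE: "ips (\<sigma> x \<inter> set (p # ps)) (\<sigma> y \<inter> set (p # ps)) =
       (if ?X \<noteq> {} \<and> Min ?X \<in> ?Y then {p} else {}) \<union> ips ?X ?Y"
      unfolding Xe ips_insert_min[OF fX ltX] Yc using MinY by auto
    have Zeq: "(\<sigma> z \<inter> set (p # ps) = (if ?X \<noteq> {} \<and> Min ?X \<in> ?Y then {p} else {}) \<union> ips ?X ?Y) \<longleftrightarrow>
       ((p \<in> \<sigma> z \<longleftrightarrow> ?X \<noteq> {} \<and> Min ?X \<in> ?Y) \<and> ?Z = ips ?X ?Y)"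
    proof -
      have "\<sigma> z \<inter> set (p # ps) = (if p \<in> \<sigma> z then {p} else {}) \<union> ?Z" by auto
      thus ?thesis using sing_un_eq[OF pnZ pZ] by simp
    qed
    have ReqE: "Req r (\<sigma> x \<inter> set (p # ps)) (\<sigma> y \<inter> set (p # ps)) \<longleftrightarrow>
       (r = 0 \<or> (r = 1 \<and> p \<in> \<sigma> y) \<or> (r = 2 \<and> p \<notin> \<sigma> y))"
      unfolding Xe Req_def MinX by simp
    show ?thesis
    proof (cases "(r = 1 \<and> p \<notin> \<sigma> y) \<or> (r = 2 \<and> p \<in> \<sigma> y)")
      case True
      hence "idelta x y z r ?a = 3" using mem assms(1,2) \<open>p \<in> \<sigma> x\<close> by (auto simp: idelta_def)
      moreover have "\<not> Req r (\<sigma> x \<inter> set (p # ps)) (\<sigma> y \<inter> set (p # ps))" using ReqE True by auto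
      ultimately show ?thesis by (simp only: st idelta3) simp
    next
      case False
      hence d: "idelta x y z r ?a = (if p \<in> \<sigma> z then 1 else 2)" using mem assms Cons.prems(2) \<open>p \<in> \<sigma> x\<close>
        by (auto simp: idelta_def)
      have RT: "Req r (\<sigma> x \<inter> set (p # ps)) (\<sigma> y \<inter> set (p # ps)) = True" using ReqE False Cons.prems(2) by auto
      show ?thesis
      proof (cases "p \<in> \<sigma> z")
        case True
        thus ?thesis unfolding st d ipsE Zeq RT simp_thms using IH[of 1] by (simp add: Req_def)
      next
        case False
        thus ?thesis unfolding st d ipsE Zeq RT simp_thms using IH[of 2] by (simp add: Req_def) blast
      qed
    qed
  next
    case False
    have Xe: "\<sigma> x \<inter> set (p # ps) = ?X" using False by auto
    have ReqE: "Req r (\<sigma> x \<inter> set (p # ps)) (\<sigma> y \<inter> set (p # ps)) \<longleftrightarrow> Req r ?X ?Y"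
      unfolding Xe Req_def using MinY by auto
    have Zeq: "\<sigma> z \<inter> set (p # ps) = ips (\<sigma> x \<inter> set (p # ps)) (\<sigma> y \<inter> set (p # ps)) \<longleftrightarrow>
       (p \<notin> \<sigma> z \<and> ?Z = ips ?X ?Y)"
    proof -
      have "\<sigma> z \<inter> set (p # ps) = (if p \<in> \<sigma> z then {p} else {}) \<union> ?Z" by auto
      moreover have "ips ?X ?Y = (if False then {p} else {}) \<union> ips ?X ?Y" by simp
      ultimately show ?thesis unfolding Xe Yc using sing_un_eq[OF pnZ pZ, of "p \<in> \<sigma> z" False] by simp
    qed
    have d: "idelta x y z r ?a = (if p \<in> \<sigma> z then 3 else r)" using mem assms Cons.prems(2) False
      by (auto simp: idelta_def)
    show ?thesis
    proof (cases "p \<in> \<sigma> z")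
      case True
      thus ?thesis unfolding st d ReqE Zeq by (simp add: idelta3)
    next
      case False
      thus ?thesis unfolding st d ReqE Zeq using IH[OF Cons.prems(2)] by simp
    qed
  qed
qed

lemma Reg_ips:
  fixes P :: "(nat \<Rightarrow> 'a::{linorder,order_bot} set) \<Rightarrow> bool"
  assumes "\<And>\<sigma>. fin \<sigma> \<Longrightarrow> P \<sigma> \<longleftrightarrow> \<sigma> z = ips (\<sigma> x) (\<sigma> y)"
  shows "Reg {x, y, z} P"
proof -
  let ?V = "{x, y, z}"
  have "regular {w. (\<lambda>r. r \<in> {0,2}) (foldl (idelta x y z) 0 w)}"
    by (rule regular_dfa[of "{0,1,2,3}"]) (auto simp: idelta_def)
  moreover have "P \<sigma> \<longleftrightarrow> word ?V \<sigma> \<in> {w. (\<lambda>r. r \<in> {0,2}) (foldl (idelta x y z) 0 w)}" if f: "fin \<sigma>" for \<sigma>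
  proof -
    let ?U = "Uset ?V \<sigma>"
    have fU: "finite ?U" using finite_Uset[OF _ f] by simp
    have sU: "set (sorted_list_of_set ?U) = ?U" using fU by simp
    have sub: "\<sigma> v \<inter> ?U = \<sigma> v" if "v \<in> ?V" for v using that by (auto simp: Uset_def)
    show ?thesis using ips_dfa[of x ?V y z "sorted_list_of_set ?U" 0 \<sigma>] assms[OF f] sU sub
      by (simp add: word_def Req_def)
  qed
  ultimately show ?thesis unfolding Reg_def by blast
qed



definition mdelta :: "nat \<Rightarrow> nat \<Rightarrow> nat \<Rightarrow> letter \<Rightarrow> nat" where
  "mdelta x z s a = (if s = 0 then (if x \<in> snd a then (if z \<in> snd a then 1 else 2) else (if z \<in> snd a then 2 else 0))
     else if s = 1 then (if z \<in> snd a then 2 else 1) else 2)"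

lemma mdelta2: "foldl (mdelta x z) 2 w = 2"
  by (induction w) (auto simp: mdelta_def)

lemma set_min_insert: "finite X \<Longrightarrow> \<forall>q\<in>X. p < q \<Longrightarrow> set_min (insert p X) = {p}"
  unfolding set_min_def by (metis Min_insert2 insert_not_empty less_imp_le)

lemma set_min_sub: "finite X \<Longrightarrow> set_min X \<subseteq> X"
  by (simp add: set_min_def)

lemma min_dfa:
  fixes \<sigma> :: "nat \<Rightarrow> 'a::{linorder,order_bot} set"
  assumes "x \<in> V" "z \<in> V" "sorted_wrt (<) ps" "s \<le> 1"
  shows "(foldl (mdelta x z) s (map (lett V \<sigma>) ps) \<noteq> 2) \<longleftrightarrow>
    (if s = 0 then \<sigma> z \<inter> set ps = set_min (\<sigma> x \<inter> set ps) else \<sigma> z \<inter> set ps = {})"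
  using assms(3,4)
proof (induction ps arbitrary: s)
  case Nil
  then show ?case by (auto simp: set_min_def)
next
  case (Cons p ps)
  let ?X = "\<sigma> x \<inter> set ps" and ?Z = "\<sigma> z \<inter> set ps"
  let ?a = "lett V \<sigma> p"
  have lt: "\<forall>q\<in>set ps. p < q" using Cons.prems by simp
  have mem: "v \<in> snd ?a \<longleftrightarrow> p \<in> \<sigma> v" if "v \<in> V" for v using that by (simp add: lett_def)
  have IH: "s' \<le> 1 \<Longrightarrow> (foldl (mdelta x z) s' (map (lett V \<sigma>) ps) \<noteq> 2) \<longleftrightarrow>
    (if s' = 0 then ?Z = set_min ?X else ?Z = {})" for s'
    using Cons.IH Cons.prems(1) by simp
  have st: "foldl (mdelta x z) s (map (lett V \<sigma>) (p # ps)) = foldl (mdelta x z) (mdelta x z s ?a) (map (lett V \<sigma>) ps)"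
    by simp
  have pZ: "p \<notin> ?Z" using lt by auto
  have pX: "p \<notin> set_min ?X" using set_min_sub[of ?X] lt by auto
  have Ze: "\<sigma> z \<inter> set (p # ps) = (if p \<in> \<sigma> z then insert p ?Z else ?Z)" by auto
  have Xe: "\<sigma> x \<inter> set (p # ps) = (if p \<in> \<sigma> x then insert p ?X else ?X)" by auto
  have smin: "p \<in> \<sigma> x \<Longrightarrow> set_min (insert p ?X) = {p}"
    using set_min_insert[of ?X p] lt by auto
  show ?case
  proof (cases "s = 0")
    case True
    show ?thesis
    proof (cases "p \<in> \<sigma> x")
      case px: True
      show ?thesis
      proof (cases "p \<in> \<sigma> z")
        case True
        hence "mdelta x z s ?a = 1" using px mem assms(1,2) \<open>s = 0\<close> by (simp add: mdelta_def)
        moreover have "(insert p ?Z = {p}) \<longleftrightarrow> ?Z = {}" using pZ by auto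
        ultimately show ?thesis unfolding st Ze Xe using IH[of 1] True px smin \<open>s = 0\<close> by simp
      next
        case False
        hence "mdelta x z s ?a = 2" using px mem assms(1,2) \<open>s = 0\<close> by (simp add: mdelta_def)
        moreover have "?Z \<noteq> {p}" using pZ by auto
        ultimately show ?thesis unfolding st Ze Xe using mdelta2 False px smin \<open>s = 0\<close> by simp
      qed
    next
      case px: False
      show ?thesis
      proof (cases "p \<in> \<sigma> z")
        case True
        hence "mdelta x z s ?a = 2" using px mem assms(1,2) \<open>s = 0\<close> by (simp add: mdelta_def)
        moreover have "insert p ?Z \<noteq> set_min ?X" using pX by auto
        ultimately show ?thesis unfolding st Ze Xe using mdelta2 True px \<open>s = 0\<close> by simp
      next
        case False
        hence "mdelta x z s ?a = 0" using px mem assms(1,2) \<open>s = 0\<close> by (simp add: mdelta_def)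
        thus ?thesis unfolding st Ze Xe using IH[of 0] False px \<open>s = 0\<close> by simp
      qed
    qed
  next
    case False
    hence s1: "s = 1" using Cons.prems(2) by simp
    show ?thesis
    proof (cases "p \<in> \<sigma> z")
      case True
      hence "mdelta x z s ?a = 2" using mem assms(1,2) s1 by (simp add: mdelta_def)
      thus ?thesis unfolding st Ze using mdelta2 True s1 by simp
    next
      case False
      hence "mdelta x z s ?a = 1" using mem assms(1,2) s1 by (simp add: mdelta_def)
      thus ?thesis unfolding st Ze using IH[of 1] False s1 by simp
    qed
  qed
qed

lemma Reg_min:
  fixes P :: "(nat \<Rightarrow> 'a::{linorder,order_bot} set) \<Rightarrow> bool"
  assumes "\<And>\<sigma>. fin \<sigma> \<Longrightarrow> P \<sigma> \<longleftrightarrow> \<sigma> z = set_min (\<sigma> x)"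
  shows "Reg {z, x} P"
proof -
  let ?V = "{z, x}"
  have "regular {w. (\<lambda>r. r \<noteq> 2) (foldl (mdelta x z) 0 w)}"
    by (rule regular_dfa[of "{0,1,2}"]) (auto simp: mdelta_def)
  moreover have "P \<sigma> \<longleftrightarrow> word ?V \<sigma> \<in> {w. (\<lambda>r. r \<noteq> 2) (foldl (mdelta x z) 0 w)}" if f: "fin \<sigma>" for \<sigma>
  proof -
    let ?U = "Uset ?V \<sigma>"
    have fU: "finite ?U" using finite_Uset[OF _ f] by simp
    have sU: "set (sorted_list_of_set ?U) = ?U" using fU by simp
    have sub: "\<sigma> v \<inter> ?U = \<sigma> v" if "v \<in> ?V" for v using that by (auto simp: Uset_def)
    show ?thesis using min_dfa[of x ?V z "sorted_list_of_set ?U" 0 \<sigma>] assms[OF f] sU sub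
      by (simp add: word_def)
  qed
  ultimately show ?thesis unfolding Reg_def by blast
qed

lemma mem_lett: "v \<in> V \<Longrightarrow> v \<in> snd (lett V \<sigma> p) \<longleftrightarrow> p \<in> \<sigma> v"
  by (simp add: lett_def)

lemma Reg_var: "Reg {z, n} (\<lambda>\<sigma>::nat \<Rightarrow> 'a::{linorder,order_bot} set. \<sigma> z = \<sigma> n)"
  by (rule Reg_all_letters[where R="\<lambda>a. z \<in> snd a \<longleftrightarrow> n \<in> snd a"]) (auto simp: lett_def Uset_def)

lemma Reg_bot: "Reg {z} (\<lambda>\<sigma>::nat \<Rightarrow> 'a::{linorder,order_bot} set. \<sigma> z = {})"
  by (rule Reg_all_letters[where R="\<lambda>a. z \<notin> snd a"]) (auto simp: lett_def Uset_def)

lemma Reg_c0: "Reg {z} (\<lambda>\<sigma>::nat \<Rightarrow> 'a::{linorder,order_bot} set. \<sigma> z = {bot})"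
proof -
  have "Reg {z} (\<lambda>\<sigma>::nat \<Rightarrow> 'a set. (\<forall>p\<in>\<sigma> z. p = bot) \<and> bot \<in> \<sigma> z)"
  proof (rule Reg_conj)
    show "Reg {z} (\<lambda>\<sigma>::nat \<Rightarrow> 'a set. \<forall>p\<in>\<sigma> z. p = bot)"
      by (rule Reg_all_letters[where R="\<lambda>a. z \<in> snd a \<longrightarrow> fst a"]) (auto simp: lett_def Uset_def)
    show "Reg {z} (\<lambda>\<sigma>::nat \<Rightarrow> 'a set. bot \<in> \<sigma> z)"
      by (rule Reg_ex_letter[where R="\<lambda>a. z \<in> snd a \<and> fst a"]) (auto simp: lett_def Uset_def)
  qed
  thus ?thesis by (rule Reg_cong) auto
qed

lemma Reg_un: "Reg {z, z1, z2} (\<lambda>\<sigma>::nat \<Rightarrow> 'a::{linorder,order_bot} set. \<sigma> z = \<sigma> z1 \<union> \<sigma> z2)"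
  by (rule Reg_all_letters[where R="\<lambda>a. z \<in> snd a \<longleftrightarrow> z1 \<in> snd a \<or> z2 \<in> snd a"]) (auto simp: lett_def Uset_def)

lemma Reg_int: "Reg {z, z1, z2} (\<lambda>\<sigma>::nat \<Rightarrow> 'a::{linorder,order_bot} set. \<sigma> z = \<sigma> z1 \<inter> \<sigma> z2)"
  by (rule Reg_all_letters[where R="\<lambda>a. z \<in> snd a \<longleftrightarrow> z1 \<in> snd a \<and> z2 \<in> snd a"]) (auto simp: lett_def Uset_def)

lemma Reg_diff: "Reg {z, z1, z2} (\<lambda>\<sigma>::nat \<Rightarrow> 'a::{linorder,order_bot} set. \<sigma> z = \<sigma> z1 - \<sigma> z2)"
  by (rule Reg_all_letters[where R="\<lambda>a. z \<in> snd a \<longleftrightarrow> z1 \<in> snd a \<and> z2 \<notin> snd a"]) (auto simp: lett_def Uset_def)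

lemma set_max_ips: "finite X \<Longrightarrow> set_max X = X - ips X X"
proof -
  assume f: "finite X"
  have e: "ips X X = {i \<in> X. \<exists>j\<in>X. i < j}" unfolding ips_def using succ_in_mem[OF f] by blast
  show ?thesis
  proof (cases "X = {}")
    case True
    then show ?thesis by (simp add: set_max_def ips_def)
  next
    case False
    have "X - ips X X = {Max X}"
    proof (rule set_eqI)
      fix i
      have "i \<in> X \<and> (\<forall>j\<in>X. \<not> i < j) \<longleftrightarrow> i = Max X"
        using Max_in[OF f False] Max_ge[OF f] by (metis antisym_conv1 less_le_not_le)
      thus "i \<in> X - ips X X \<longleftrightarrow> i \<in> {Max X}" unfolding e by auto
    qed
    thus ?thesis using False by (simp add: set_max_def)
  qed
qed



lemma fresh: "finite (S::nat set) \<Longrightarrow> \<exists>n. n \<notin> S"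
  using ex_new_if_finite[OF infinite_UNIV_nat] by blast

lemma finite_vars_tm: "finite (vars_tm t)"
  by (induction t) auto

lemma finite_free_vars: "finite (free_vars f)"
  by (induction f) (auto simp: finite_vars_tm)

lemma eval_fin: "fin \<sigma> \<Longrightarrow> finite (eval_tm \<sigma> t)"
proof (induction t)
  case (TMin t) thus ?case by (simp add: set_min_def)
next
  case (TMax t) thus ?case by (simp add: set_max_def)
next
  case (TIps s t) thus ?case using ips_sub[of "eval_tm \<sigma> s" "eval_tm \<sigma> t"] by (simp add: finite_subset)
qed (auto simp: fin_def)

lemma eval_cong: "(\<And>v. v \<in> vars_tm t \<Longrightarrow> \<sigma> v = \<sigma>' v) \<Longrightarrow> eval_tm \<sigma> t = eval_tm \<sigma>' t"
  by (induction t) auto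

lemma Reg_bin:
  fixes f :: "'a::{dense_linorder,no_top,order_bot} set \<Rightarrow> 'a set \<Rightarrow> 'a set"
  assumes base: "\<And>z z1 z2. z \<noteq> z1 \<Longrightarrow> z \<noteq> z2 \<Longrightarrow> z1 \<noteq> z2 \<Longrightarrow> Reg {z, z1, z2} (\<lambda>\<sigma>::nat \<Rightarrow> 'a set. \<sigma> z = f (\<sigma> z1) (\<sigma> z2))"
    and IH1: "\<And>z. z \<notin> vars_tm s1 \<Longrightarrow> Reg (insert z (vars_tm s1)) (\<lambda>\<sigma>::nat \<Rightarrow> 'a set. \<sigma> z = eval_tm \<sigma> s1)"
    and IH2: "\<And>z. z \<notin> vars_tm s2 \<Longrightarrow> Reg (insert z (vars_tm s2)) (\<lambda>\<sigma>::nat \<Rightarrow> 'a set. \<sigma> z = eval_tm \<sigma> s2)"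
    and z: "z \<notin> vars_tm s1 \<union> vars_tm s2"
  shows "Reg (insert z (vars_tm s1 \<union> vars_tm s2)) (\<lambda>\<sigma>::nat \<Rightarrow> 'a set. \<sigma> z = f (eval_tm \<sigma> s1) (eval_tm \<sigma> s2))"
proof -
  let ?S = "insert z (vars_tm s1 \<union> vars_tm s2)"
  have fS: "finite ?S" by (simp add: finite_vars_tm)
  obtain z1 where z1: "z1 \<notin> ?S" using fresh[OF fS] by blast
  obtain z2 where z2: "z2 \<notin> insert z1 ?S" using fresh[of "insert z1 ?S"] fS by blast
  let ?W = "insert z1 (insert z2 ?S)"
  have fW: "finite ?W" using fS by simp
  have R1: "Reg ?W (\<lambda>\<sigma>::nat \<Rightarrow> 'a set. \<sigma> z1 = eval_tm \<sigma> s1)"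
    by (rule Reg_mono[OF IH1 _ fW]) (use z1 in auto)
  have R2: "Reg ?W (\<lambda>\<sigma>::nat \<Rightarrow> 'a set. \<sigma> z2 = eval_tm \<sigma> s2)"
    by (rule Reg_mono[OF IH2 _ fW]) (use z2 in auto)
  have R0: "Reg ?W (\<lambda>\<sigma>::nat \<Rightarrow> 'a set. \<sigma> z = f (\<sigma> z1) (\<sigma> z2))"
    by (rule Reg_mono[OF base _ fW]) (use z1 z2 in auto)
  let ?Q = "\<lambda>\<sigma>::nat \<Rightarrow> 'a set. \<sigma> z1 = eval_tm \<sigma> s1 \<and> \<sigma> z2 = eval_tm \<sigma> s2 \<and> \<sigma> z = f (\<sigma> z1) (\<sigma> z2)"
  have "Reg ?W ?Q" using Reg_conj[OF R1 Reg_conj[OF R2 R0]] .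
  from Reg_ex[OF Reg_ex[OF this, of z2], of z1]
  have R: "Reg (?W - {z2} - {z1}) (\<lambda>\<sigma>. \<exists>B. finite B \<and> (\<exists>A. finite A \<and> ?Q (\<sigma>(z1 := B, z2 := A))))" .
  have We: "?W - {z2} - {z1} = ?S" using z1 z2 by auto
  show ?thesis
  proof (rule Reg_cong[OF R[unfolded We]])
    fix \<sigma> :: "nat \<Rightarrow> 'a set" assume f: "fin \<sigma>"
    have e: "eval_tm (\<sigma>(z1 := B, z2 := A)) s = eval_tm \<sigma> s" if "s = s1 \<or> s = s2" for s A B
      by (rule eval_cong) (use that z1 z2 in auto)
    have zz: "z \<noteq> z1" "z \<noteq> z2" "z1 \<noteq> z2" using z1 z2 by auto
    show "(\<exists>B. finite B \<and> (\<exists>A. finite A \<and> ?Q (\<sigma>(z1 := B, z2 := A)))) \<longleftrightarrow> \<sigma> z = f (eval_tm \<sigma> s1) (eval_tm \<sigma> s2)"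
      using e zz eval_fin[OF f, of s1] eval_fin[OF f, of s2] by auto
  qed
qed

lemma Reg_term:
  fixes t :: tm
  shows "z \<notin> vars_tm t \<Longrightarrow> Reg (insert z (vars_tm t)) (\<lambda>\<sigma>::nat \<Rightarrow> 'a::{dense_linorder,no_top,order_bot} set. \<sigma> z = eval_tm \<sigma> t)"
proof (induction t arbitrary: z)
  case (TVar n)
  then show ?case using Reg_var[of z n] by simp
next
  case TBot
  then show ?case using Reg_bot[of z] by simp
next
  case TC0
  then show ?case using Reg_c0[of z] by simp
next
  case (TUn s1 s2)
  have z: "z \<notin> vars_tm s1 \<union> vars_tm s2" using TUn.prems by simp
  have "Reg (insert z (vars_tm s1 \<union> vars_tm s2)) (\<lambda>\<sigma>::nat \<Rightarrow> 'a set. \<sigma> z = (\<union>) (eval_tm \<sigma> s1) (eval_tm \<sigma> s2))"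
    by (rule Reg_bin[where f="(\<union>)", OF _ TUn.IH z]) (rule Reg_un)
  then show ?case by simp
next
  case (TInt s1 s2)
  have z: "z \<notin> vars_tm s1 \<union> vars_tm s2" using TInt.prems by simp
  have "Reg (insert z (vars_tm s1 \<union> vars_tm s2)) (\<lambda>\<sigma>::nat \<Rightarrow> 'a set. \<sigma> z = (\<inter>) (eval_tm \<sigma> s1) (eval_tm \<sigma> s2))"
    by (rule Reg_bin[where f="(\<inter>)", OF _ TInt.IH z]) (rule Reg_int)
  then show ?case by simp
next
  case (TIps s1 s2)
  have base: "Reg {z, z1, z2} (\<lambda>\<sigma>::nat \<Rightarrow> 'a set. \<sigma> z = ips (\<sigma> z1) (\<sigma> z2))" for z z1 z2
    using Reg_ips[of "\<lambda>\<sigma>::nat \<Rightarrow> 'a set. \<sigma> z = ips (\<sigma> z1) (\<sigma> z2)" z z1 z2]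
    by (simp add: insert_commute)
  have z: "z \<notin> vars_tm s1 \<union> vars_tm s2" using TIps.prems by simp
  have "Reg (insert z (vars_tm s1 \<union> vars_tm s2)) (\<lambda>\<sigma>::nat \<Rightarrow> 'a set. \<sigma> z = ips (eval_tm \<sigma> s1) (eval_tm \<sigma> s2))"
    by (rule Reg_bin[where f="ips", OF _ TIps.IH z]) (rule base)
  then show ?case by simp
next
  case (TMin t)
  have base: "Reg {z, z1, z2} (\<lambda>\<sigma>::nat \<Rightarrow> 'a set. \<sigma> z = set_min (\<sigma> z1))" for z z1 z2
    by (rule Reg_mono[OF Reg_min[of "\<lambda>\<sigma>::nat \<Rightarrow> 'a set. \<sigma> z = set_min (\<sigma> z1)" z z1]]) auto
  have z: "z \<notin> vars_tm t \<union> vars_tm t" using TMin.prems by simp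
  have "Reg (insert z (vars_tm t \<union> vars_tm t)) (\<lambda>\<sigma>::nat \<Rightarrow> 'a set. \<sigma> z = (\<lambda>X Y. set_min X) (eval_tm \<sigma> t) (eval_tm \<sigma> t))"
    by (rule Reg_bin[where f="\<lambda>X Y. set_min X", OF _ TMin.IH TMin.IH z]) (rule base)
  then show ?case by simp
next
  case (TMax t)
  have base: "Reg {z, z1, z2} (\<lambda>\<sigma>::nat \<Rightarrow> 'a set. \<sigma> z = set_max (\<sigma> z1))" if "z \<noteq> z1" for z z1 z2
  proof -
    obtain w where w: "w \<notin> {z, z1}" using fresh[of "{z, z1}"] by auto
    have "Reg {z, z1, w} (\<lambda>\<sigma>::nat \<Rightarrow> 'a set. \<sigma> w = ips (\<sigma> z1) (\<sigma> z1) \<and> \<sigma> z = \<sigma> z1 - \<sigma> w)"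
    proof (rule Reg_conj)
      show "Reg {z, z1, w} (\<lambda>\<sigma>::nat \<Rightarrow> 'a set. \<sigma> w = ips (\<sigma> z1) (\<sigma> z1))"
        by (rule Reg_mono[OF Reg_ips[of "\<lambda>\<sigma>::nat \<Rightarrow> 'a set. \<sigma> w = ips (\<sigma> z1) (\<sigma> z1)" w z1 z1]]) auto
      show "Reg {z, z1, w} (\<lambda>\<sigma>::nat \<Rightarrow> 'a set. \<sigma> z = \<sigma> z1 - \<sigma> w)" by (rule Reg_diff)
    qed
    from Reg_ex[OF this, of w]
    have R: "Reg {z, z1} (\<lambda>\<sigma>::nat \<Rightarrow> 'a set. \<exists>A. finite A \<and> (\<sigma>(w := A)) w = ips ((\<sigma>(w := A)) z1) ((\<sigma>(w := A)) z1) \<and> (\<sigma>(w := A)) z = (\<sigma>(w := A)) z1 - (\<sigma>(w := A)) w)"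
      using w by (simp add: insert_Diff_if)
    have "Reg {z, z1} (\<lambda>\<sigma>::nat \<Rightarrow> 'a set. \<sigma> z = set_max (\<sigma> z1))"
    proof (rule Reg_cong[OF R])
      fix \<sigma> :: "nat \<Rightarrow> 'a set" assume f: "fin \<sigma>"
      have fz: "finite (\<sigma> z1)" using f by (simp add: fin_def)
      have "finite (ips (\<sigma> z1) (\<sigma> z1))" using ips_sub finite_subset fz by blast
      thus "(\<exists>A. finite A \<and> (\<sigma>(w := A)) w = ips ((\<sigma>(w := A)) z1) ((\<sigma>(w := A)) z1) \<and> (\<sigma>(w := A)) z = (\<sigma>(w := A)) z1 - (\<sigma>(w := A)) w)
         \<longleftrightarrow> \<sigma> z = set_max (\<sigma> z1)" using w set_max_ips[OF fz] by auto
    qed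
    thus ?thesis by (rule Reg_mono) auto
  qed
  have z: "z \<notin> vars_tm t \<union> vars_tm t" using TMax.prems by simp
  have "Reg (insert z (vars_tm t \<union> vars_tm t)) (\<lambda>\<sigma>::nat \<Rightarrow> 'a set. \<sigma> z = (\<lambda>X Y. set_max X) (eval_tm \<sigma> t) (eval_tm \<sigma> t))"
    by (rule Reg_bin[where f="\<lambda>X Y. set_max X", OF _ TMax.IH TMax.IH z]) (rule base)
  then show ?case by simp
qed



lemma Reg_fm: "Reg (free_vars \<phi>) (\<lambda>\<sigma>::nat \<Rightarrow> 'a::{dense_linorder,no_top,order_bot} set. holds \<sigma> \<phi>)"
proof (induction \<phi>)
  case (FEq s t)
  let ?S = "vars_tm s \<union> vars_tm t"
  obtain z where z: "z \<notin> ?S" using fresh[of ?S] finite_vars_tm by auto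
  have "Reg (insert z (vars_tm s) \<union> insert z (vars_tm t)) (\<lambda>\<sigma>::nat \<Rightarrow> 'a set. \<sigma> z = eval_tm \<sigma> s \<and> \<sigma> z = eval_tm \<sigma> t)"
    by (rule Reg_conj2; rule Reg_term) (use z in auto)
  from Reg_ex[OF this, of z]
  have R: "Reg ?S (\<lambda>\<sigma>::nat \<Rightarrow> 'a set. \<exists>A. finite A \<and> (\<sigma>(z := A)) z = eval_tm (\<sigma>(z := A)) s \<and> (\<sigma>(z := A)) z = eval_tm (\<sigma>(z := A)) t)"
    using z by (simp add: insert_Diff_if Un_Diff)
  have "Reg ?S (\<lambda>\<sigma>::nat \<Rightarrow> 'a set. holds \<sigma> (FEq s t))"
  proof (rule Reg_cong[OF R])
    fix \<sigma> :: "nat \<Rightarrow> 'a set" assume f: "fin \<sigma>"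
    have e: "eval_tm (\<sigma>(z := A)) u = eval_tm \<sigma> u" if "u = s \<or> u = t" for u A
      by (rule eval_cong) (use that z in auto)
    show "(\<exists>A. finite A \<and> (\<sigma>(z := A)) z = eval_tm (\<sigma>(z := A)) s \<and> (\<sigma>(z := A)) z = eval_tm (\<sigma>(z := A)) t) \<longleftrightarrow> holds \<sigma> (FEq s t)"
      using e eval_fin[OF f, of s] by auto
  qed
  thus ?case by simp
next
  case (FNot f)
  then show ?case using Reg_not by fastforce
next
  case (FConj f g)
  then show ?case using Reg_conj2 by fastforce
next
  case (FDisj f g)
  then show ?case using Reg_disj2 by fastforce
next
  case (FImp f g)
  have "Reg (free_vars f \<union> free_vars g) (\<lambda>\<sigma>::nat \<Rightarrow> 'a set. \<not> holds \<sigma> f \<or> holds \<sigma> g)"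
    by (rule Reg_disj2[OF Reg_not[OF FImp.IH(1)] FImp.IH(2)])
  then show ?case unfolding free_vars.simps by (rule Reg_cong) auto
next
  case (FEx x f)
  show ?case unfolding free_vars.simps using Reg_ex[OF FEx.IH, of x] by (rule Reg_cong) (simp add: fun_upd_def)
next
  case (FAll x f)
  have "Reg (free_vars f - {x}) (\<lambda>\<sigma>::nat \<Rightarrow> 'a set. \<not> (\<exists>A. finite A \<and> \<not> holds (\<sigma>(x := A)) f))"
    by (rule Reg_not[OF Reg_ex[OF Reg_not[OF FAll.IH]]])
  then show ?case unfolding free_vars.simps by (rule Reg_cong) auto
qed



definition TT :: fm where "TT = FEq TBot TBot"
definition FF :: fm where "FF = FEq TC0 TBot"
definition conjL :: "fm list \<Rightarrow> fm" where "conjL fs = foldr FConj fs TT"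
definition exL :: "nat list \<Rightarrow> fm \<Rightarrow> fm" where "exL ns f = foldr FEx ns f"
definition unT :: "tm list \<Rightarrow> tm" where "unT ts = foldr TUn ts TBot"
definition sub :: "tm \<Rightarrow> tm \<Rightarrow> fm" where "sub s t = FEq (TInt s t) s"
definition dis :: "tm \<Rightarrow> tm \<Rightarrow> fm" where "dis s t = FEq (TInt s t) TBot"

lemma holds_TT[simp]: "holds \<sigma> TT" by (simp add: TT_def)
lemma holds_FF[simp]: "\<not> holds \<sigma> FF" by (simp add: FF_def)
lemma pos_TT[simp]: "pos_ex TT" "pos_ex FF" by (simp_all add: TT_def FF_def)
lemma fv_TT[simp]: "free_vars TT = {}" "free_vars FF = {}" by (simp_all add: TT_def FF_def)

lemma holds_conjL[simp]: "holds \<sigma> (conjL fs) \<longleftrightarrow> (\<forall>f\<in>set fs. holds \<sigma> f)"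
  by (induction fs) (auto simp: conjL_def)
lemma pos_conjL: "(\<forall>f\<in>set fs. pos_ex f) \<Longrightarrow> pos_ex (conjL fs)"
  by (induction fs) (auto simp: conjL_def)
lemma fv_conjL[simp]: "free_vars (conjL fs) = (\<Union>f\<in>set fs. free_vars f)"
  by (induction fs) (auto simp: conjL_def)

lemma pos_exL: "pos_ex f \<Longrightarrow> pos_ex (exL ns f)"
  by (induction ns) (auto simp: exL_def)
lemma fv_exL[simp]: "free_vars (exL ns f) = free_vars f - set ns"
  by (induction ns) (auto simp: exL_def)
lemma holds_exL: "holds \<sigma> (exL ns f) \<longleftrightarrow>
   (\<exists>\<tau>. (\<forall>n\<in>set ns. finite (\<tau> n)) \<and> (\<forall>n. n \<notin> set ns \<longrightarrow> \<tau> n = \<sigma> n) \<and> holds \<tau> f)"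
proof (induction ns arbitrary: \<sigma>)
  case Nil
  have "(\<forall>n. \<tau> n = \<sigma> n) \<longleftrightarrow> \<tau> = \<sigma>" for \<tau> by auto
  then show ?case by (simp add: exL_def)
next
  case (Cons m ns)
  have "holds \<sigma> (exL (m # ns) f) \<longleftrightarrow> (\<exists>A. finite A \<and> holds (\<sigma>(m := A)) (exL ns f))"
    by (simp add: exL_def)
  also have "\<dots> \<longleftrightarrow> (\<exists>\<tau>. (\<forall>n\<in>set (m # ns). finite (\<tau> n)) \<and> (\<forall>n. n \<notin> set (m # ns) \<longrightarrow> \<tau> n = \<sigma> n) \<and> holds \<tau> f)"
  proof
    assume "\<exists>A. finite A \<and> holds (\<sigma>(m := A)) (exL ns f)"
    then obtain A where A: "finite A" "holds (\<sigma>(m := A)) (exL ns f)" by blast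
    from A(2) have "\<exists>\<tau>. (\<forall>n\<in>set ns. finite (\<tau> n)) \<and> (\<forall>n. n \<notin> set ns \<longrightarrow> \<tau> n = (\<sigma>(m := A)) n) \<and> holds \<tau> f"
      by (simp only: Cons.IH)
    then obtain \<tau> where t: "\<forall>n\<in>set ns. finite (\<tau> n)" "\<forall>n. n \<notin> set ns \<longrightarrow> \<tau> n = (\<sigma>(m := A)) n" "holds \<tau> f"
      by blast
    have "finite (\<tau> m)"
    proof (cases "m \<in> set ns")
      case True thus ?thesis using t(1) by blast
    next
      case False thus ?thesis using t(2) A(1) by simp
    qed
    hence t1: "\<forall>n\<in>set (m # ns). finite (\<tau> n)" using t(1) by simp
    have t2: "\<forall>n. n \<notin> set (m # ns) \<longrightarrow> \<tau> n = \<sigma> n" using t(2) by simp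
    show "\<exists>\<tau>. (\<forall>n\<in>set (m # ns). finite (\<tau> n)) \<and> (\<forall>n. n \<notin> set (m # ns) \<longrightarrow> \<tau> n = \<sigma> n) \<and> holds \<tau> f"
      using t1 t2 t(3) by blast
  next
    assume "\<exists>\<tau>. (\<forall>n\<in>set (m # ns). finite (\<tau> n)) \<and> (\<forall>n. n \<notin> set (m # ns) \<longrightarrow> \<tau> n = \<sigma> n) \<and> holds \<tau> f"
    then obtain \<tau> where t: "\<forall>n\<in>set (m # ns). finite (\<tau> n)" "\<forall>n. n \<notin> set (m # ns) \<longrightarrow> \<tau> n = \<sigma> n" "holds \<tau> f" by blast
    let ?A = "if m \<in> set ns then {} else \<tau> m"
    have "finite ?A" using t(1) by auto
    moreover have "\<forall>n. n \<notin> set ns \<longrightarrow> \<tau> n = (\<sigma>(m := ?A)) n" using t(2) by auto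
    moreover have "\<forall>n\<in>set ns. finite (\<tau> n)" using t(1) by simp
    ultimately have "holds (\<sigma>(m := ?A)) (exL ns f)"
      unfolding Cons.IH using t(3) by (intro exI[of _ \<tau>] conjI) simp_all
    thus "\<exists>A. finite A \<and> holds (\<sigma>(m := A)) (exL ns f)" using \<open>finite ?A\<close> by blast
  qed
  finally show ?case .
qed

lemma eval_unT[simp]: "eval_tm \<sigma> (unT ts) = (\<Union>t\<in>set ts. eval_tm \<sigma> t)"
  by (induction ts) (auto simp: unT_def)
lemma vars_unT[simp]: "vars_tm (unT ts) = (\<Union>t\<in>set ts. vars_tm t)"
  by (induction ts) (auto simp: unT_def)
lemma holds_sub[simp]: "holds \<sigma> (sub s t) \<longleftrightarrow> eval_tm \<sigma> s \<subseteq> eval_tm \<sigma> t"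
  by (auto simp: sub_def)
lemma holds_dis[simp]: "holds \<sigma> (dis s t) \<longleftrightarrow> eval_tm \<sigma> s \<inter> eval_tm \<sigma> t = {}"
  by (auto simp: dis_def)
lemma pos_sub[simp]: "pos_ex (sub s t)" "pos_ex (dis s t)" by (simp_all add: sub_def dis_def)
lemma fv_sub[simp]: "free_vars (sub s t) = vars_tm s \<union> vars_tm t" "free_vars (dis s t) = vars_tm s \<union> vars_tm t"
  by (auto simp: sub_def dis_def)

definition nonempty :: "tm \<Rightarrow> fm" where
  "nonempty T = FDisj (FEq (TIps (TUn TC0 (TMax T)) (TMax T)) TC0) (FEq (TMax T) TC0)"

lemma pos_nonempty: "pos_ex (nonempty T)" by (simp add: nonempty_def)
lemma fv_nonempty: "free_vars (nonempty T) = vars_tm T" by (auto simp: nonempty_def)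

lemma holds_nonempty:
  fixes \<sigma> :: "nat \<Rightarrow> 'a::{linorder,order_bot} set"
  assumes "finite (eval_tm \<sigma> T)"
  shows "holds \<sigma> (nonempty T) \<longleftrightarrow> eval_tm \<sigma> T \<noteq> {}"
proof (cases "eval_tm \<sigma> T = {}")
  case True
  then show ?thesis by (simp add: nonempty_def set_max_def ips_def)
next
  case False
  let ?M = "Max (eval_tm \<sigma> T)"
  show ?thesis
  proof (cases "?M = bot")
    case True
    then show ?thesis using False by (simp add: nonempty_def set_max_def)
  next
    case nb: False
    hence lt: "bot < ?M" by (simp add: bot.not_eq_extremum)
    have "succ_in {bot, ?M} bot = ?M"
    proof -
      have "{j \<in> {bot, ?M}. bot < j} = {?M}" using lt by auto
      thus ?thesis by (simp add: succ_in_def)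
    qed
    hence "ips {bot, ?M} {?M} = {bot}" using lt by (auto simp: ips_def)
    moreover have "{?M, bot} = {bot, ?M}" by auto
    ultimately show ?thesis using False by (simp add: nonempty_def set_max_def)
  qed
qed



lemma sorted_less_idx:
  fixes ps :: "'a::linorder list"
  assumes "sorted_wrt (<) ps" "i < length ps" "j < length ps" "ps ! i < ps ! j"
  shows "i < j"
proof (rule ccontr)
  assume "\<not> i < j"
  hence "j \<le> i" by simp
  hence "ps ! j \<le> ps ! i" using assms(1,2) strict_sorted_iff sorted_nth_mono by blast
  thus False using assms(4) by simp
qed

lemma ips_nth:
  fixes ps :: "'a::linorder list"
  assumes s: "sorted_wrt (<) ps" and k: "k < length ps"
  shows "ps ! k \<in> ips (set ps) Y \<longleftrightarrow> (Suc k < length ps \<and> ps ! Suc k \<in> Y)"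
proof -
  have ex: "(\<exists>j\<in>set ps. ps ! k < j) \<longleftrightarrow> Suc k < length ps"
  proof
    assume "\<exists>j\<in>set ps. ps ! k < j"
    then obtain m where "m < length ps" "ps ! k < ps ! m" by (metis in_set_conv_nth)
    hence "k < m" using sorted_less_idx[OF s k] by blast
    thus "Suc k < length ps" using \<open>m < length ps\<close> by simp
  next
    assume "Suc k < length ps"
    thus "\<exists>j\<in>set ps. ps ! k < j" using s sorted_wrt_nth_less[OF s, of k "Suc k"] by (meson lessI nth_mem)
  qed
  have sc: "succ_in (set ps) (ps ! k) = ps ! Suc k" if "Suc k < length ps"
  proof -
    have "Min {j \<in> set ps. ps ! k < j} = ps ! Suc k"
    proof (rule Min_eqI)
      show "finite {j \<in> set ps. ps ! k < j}" by simp
      show "ps ! Suc k \<in> {j \<in> set ps. ps ! k < j}" using that sorted_wrt_nth_less[OF s, of k "Suc k"] by simp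
      fix y assume "y \<in> {j \<in> set ps. ps ! k < j}"
      then obtain m where "m < length ps" "y = ps ! m" "ps ! k < ps ! m" by (auto simp: in_set_conv_nth)
      hence "Suc k \<le> m" using sorted_less_idx[OF s k] by (metis Suc_leI)
      thus "ps ! Suc k \<le> y" using \<open>y = ps ! m\<close> \<open>m < length ps\<close> s strict_sorted_iff sorted_nth_mono by blast
    qed
    thus ?thesis by (simp add: succ_in_def)
  qed
  show ?thesis unfolding ips_def using ex sc k by auto
qed

lemma set_min_list:
  fixes ps :: "'a::linorder list"
  assumes s: "sorted_wrt (<) ps" and ne: "ps \<noteq> []"
  shows "set_min (set ps) = {ps ! 0}"
proof -
  have "Min (set ps) = ps ! 0"
  proof (rule Min_eqI)
    show "ps ! 0 \<in> set ps" using ne by simp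
    fix y assume "y \<in> set ps"
    then obtain m where "m < length ps" "y = ps ! m" by (auto simp: in_set_conv_nth)
    thus "ps ! 0 \<le> y" using s strict_sorted_iff sorted_nth_mono by blast
  qed simp
  thus ?thesis using ne by (simp add: set_min_def)
qed

lemma set_max_list:
  fixes ps :: "'a::linorder list"
  assumes s: "sorted_wrt (<) ps" and ne: "ps \<noteq> []"
  shows "set_max (set ps) = {ps ! (length ps - 1)}"
proof -
  have "Max (set ps) = ps ! (length ps - 1)"
  proof (rule Max_eqI)
    show "ps ! (length ps - 1) \<in> set ps" using ne by simp
    fix y assume "y \<in> set ps"
    then obtain m where "m < length ps" "y = ps ! m" by (auto simp: in_set_conv_nth)
    moreover have "sorted ps" using s strict_sorted_iff by blast
    ultimately show "y \<le> ps ! (length ps - 1)" using sorted_nth_mono[of ps m "length ps - 1"] by simp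
  qed simp
  thus ?thesis using ne by (simp add: set_max_def)
qed

lemma quot_range: "K \<in> range (\<lambda>u. quot u L) \<Longrightarrow> quot [a] K \<in> range (\<lambda>u. quot u L)"
proof -
  assume "K \<in> range (\<lambda>u. quot u L)"
  then obtain u where "K = quot u L" by blast
  hence "quot [a] K = quot (u @ [a]) L" by (simp add: quot_append)
  thus ?thesis by blast
qed

lemma ball_concat_map: "(\<forall>f\<in>set (concat (map (\<lambda>a. map (g a) (ys a)) as)). P f) \<longleftrightarrow> (\<forall>a\<in>set as. \<forall>y\<in>set (ys a). P (g a y))"
  by auto

lemma ball_map: "(\<forall>f\<in>set (map g as). P f) \<longleftrightarrow> (\<forall>a\<in>set as. P (g a))"
  by auto

locale enc =
  fixes V :: "nat set" and L :: "letter list set" and N :: nat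
    and eX :: "letter \<Rightarrow> nat" and eQ :: "letter list set \<Rightarrow> nat"
    and ls :: "letter list" and qs :: "letter list set list" and xs :: "nat list"
  assumes V_lt: "\<forall>v\<in>V. v < N"
    and ls: "set ls = {a. good V a}"
    and qs: "set qs = range (\<lambda>u. quot u L)"
    and xs: "set xs = V"
    and eX: "inj_on eX (set ls)" and eQ: "inj_on eQ (set qs)"
begin

definition vX :: "letter \<Rightarrow> nat" where "vX a = N + 2 * eX a"
definition vQ :: "letter list set \<Rightarrow> nat" where "vQ K = N + 2 * eQ K + 1"
definition TU :: tm where "TU = unT (map TVar xs)"
definition XT :: "letter \<Rightarrow> tm" where "XT a = TVar (vX a)"
definition QT :: "letter list set \<Rightarrow> tm" where "QT K = TVar (vQ K)"

definition conds :: "fm list" where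
  "conds = [sub TU (unT (map XT ls)), sub (TMax TU) (unT (map QT (filter (\<lambda>K. [] \<in> K) qs)))]
   @ concat (map (\<lambda>a. map (\<lambda>y. if y \<in> snd a then sub (XT a) (TVar y) else dis (XT a) (TVar y)) xs) ls)
   @ map (\<lambda>a. if fst a then sub (XT a) TC0 else dis (XT a) TC0) ls
   @ concat (map (\<lambda>K. map (\<lambda>K'. dis (QT K) (QT K')) (filter (\<lambda>K'. K' \<noteq> K) qs)) qs)
   @ map (\<lambda>a. sub (TInt (TMin TU) (XT a)) (QT (quot [a] L))) ls
   @ concat (map (\<lambda>K. map (\<lambda>a. sub (TInt (TIps TU (XT a)) (QT K)) (TIps TU (QT (quot [a] K)))) ls) qs)"

definition bound :: "nat list" where "bound = map vX ls @ map vQ qs"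

definition run :: fm where "run = exL bound (conjL conds)"

definition psi :: fm where
  "psi = FDisj (FConj (nonempty TU) run) (FConj (FEq TU TBot) (if [] \<in> L then TT else FF))"

definition Cond :: "(nat \<Rightarrow> 'a::{linorder,order_bot} set) \<Rightarrow> bool" where
  "Cond \<tau> \<longleftrightarrow>
  (Uset V \<tau> \<subseteq> (\<Union>a\<in>set ls. \<tau> (vX a))) \<and>
  (set_max (Uset V \<tau>) \<subseteq> (\<Union>K\<in>{K\<in>set qs. [] \<in> K}. \<tau> (vQ K))) \<and>
  (\<forall>a\<in>set ls. \<forall>y\<in>V. (y \<in> snd a \<longrightarrow> \<tau> (vX a) \<subseteq> \<tau> y) \<and> (y \<notin> snd a \<longrightarrow> \<tau> (vX a) \<inter> \<tau> y = {})) \<and>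
  (\<forall>a\<in>set ls. (fst a \<longrightarrow> \<tau> (vX a) \<subseteq> {bot}) \<and> (\<not> fst a \<longrightarrow> bot \<notin> \<tau> (vX a))) \<and>
  (\<forall>K\<in>set qs. \<forall>K'\<in>set qs. K' \<noteq> K \<longrightarrow> \<tau> (vQ K) \<inter> \<tau> (vQ K') = {}) \<and>
  (\<forall>a\<in>set ls. set_min (Uset V \<tau>) \<inter> \<tau> (vX a) \<subseteq> \<tau> (vQ (quot [a] L))) \<and>
  (\<forall>K\<in>set qs. \<forall>a\<in>set ls. ips (Uset V \<tau>) (\<tau> (vX a)) \<inter> \<tau> (vQ K) \<subseteq> ips (Uset V \<tau>) (\<tau> (vQ (quot [a] K))))"

lemma eval_TU[simp]: "eval_tm \<tau> TU = Uset V \<tau>"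
  by (simp add: TU_def Uset_def xs[symmetric])

lemma vars_TU[simp]: "vars_tm TU = V"
  by (simp add: TU_def xs[symmetric])

lemma holds_conds: "holds \<tau> (conjL conds) \<longleftrightarrow> Cond \<tau>"
proof -
  have a: "holds \<tau> (sub TU (unT (map XT ls))) \<longleftrightarrow> Uset V \<tau> \<subseteq> (\<Union>a\<in>set ls. \<tau> (vX a))"
    by (simp add: XT_def)
  have b: "holds \<tau> (sub (TMax TU) (unT (map QT (filter (\<lambda>K. [] \<in> K) qs)))) \<longleftrightarrow>
     set_max (Uset V \<tau>) \<subseteq> (\<Union>K\<in>{K\<in>set qs. [] \<in> K}. \<tau> (vQ K))"
    by (simp add: QT_def)
  have c: "(\<forall>f\<in>set (concat (map (\<lambda>a. map (\<lambda>y. if y \<in> snd a then sub (XT a) (TVar y) else dis (XT a) (TVar y)) xs) ls)). holds \<tau> f)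
     \<longleftrightarrow> (\<forall>a\<in>set ls. \<forall>y\<in>V. (y \<in> snd a \<longrightarrow> \<tau> (vX a) \<subseteq> \<tau> y) \<and> (y \<notin> snd a \<longrightarrow> \<tau> (vX a) \<inter> \<tau> y = {}))"
    unfolding ball_concat_map by (simp add: XT_def xs[symmetric] split: if_split)
  have d: "(\<forall>f\<in>set (map (\<lambda>a. if fst a then sub (XT a) TC0 else dis (XT a) TC0) ls). holds \<tau> f)
     \<longleftrightarrow> (\<forall>a\<in>set ls. (fst a \<longrightarrow> \<tau> (vX a) \<subseteq> {bot}) \<and> (\<not> fst a \<longrightarrow> bot \<notin> \<tau> (vX a)))"
    unfolding ball_map by (simp add: XT_def split: if_split)
  have e: "(\<forall>f\<in>set (concat (map (\<lambda>K. map (\<lambda>K'. dis (QT K) (QT K')) (filter (\<lambda>K'. K' \<noteq> K) qs)) qs)). holds \<tau> f)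
     \<longleftrightarrow> (\<forall>K\<in>set qs. \<forall>K'\<in>set qs. K' \<noteq> K \<longrightarrow> \<tau> (vQ K) \<inter> \<tau> (vQ K') = {})"
    unfolding ball_concat_map by (simp add: QT_def) blast
  have f: "(\<forall>f\<in>set (map (\<lambda>a. sub (TInt (TMin TU) (XT a)) (QT (quot [a] L))) ls). holds \<tau> f)
     \<longleftrightarrow> (\<forall>a\<in>set ls. set_min (Uset V \<tau>) \<inter> \<tau> (vX a) \<subseteq> \<tau> (vQ (quot [a] L)))"
    unfolding ball_map by (simp add: XT_def QT_def)
  have g: "(\<forall>f\<in>set (concat (map (\<lambda>K. map (\<lambda>a. sub (TInt (TIps TU (XT a)) (QT K)) (TIps TU (QT (quot [a] K)))) ls) qs)). holds \<tau> f)
     \<longleftrightarrow> (\<forall>K\<in>set qs. \<forall>a\<in>set ls. ips (Uset V \<tau>) (\<tau> (vX a)) \<inter> \<tau> (vQ K) \<subseteq> ips (Uset V \<tau>) (\<tau> (vQ (quot [a] K))))"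
    unfolding ball_concat_map by (simp add: XT_def QT_def)
  show ?thesis unfolding holds_conjL conds_def set_append ball_Un Cond_def
    using a b c d e f g by simp
qed

lemma pos_psi: "pos_ex psi"
proof -
  have "\<forall>f\<in>set conds. pos_ex f" by (auto simp: conds_def)
  thus ?thesis unfolding psi_def run_def by (simp add: pos_nonempty pos_exL pos_conjL)
qed

lemma quotL_in: "quot [a] L \<in> set qs"
proof -
  have "L = quot [] L" by (simp add: quot_def)
  hence "L \<in> range (\<lambda>u. quot u L)" by blast
  thus ?thesis using quot_range[of L L a] qs by simp
qed

lemma quotK_in: "K \<in> set qs \<Longrightarrow> quot [a] K \<in> set qs"
  using quot_range[of K L a] qs by simp

lemma fv_conds: "\<forall>f\<in>set conds. free_vars f \<subseteq> V \<union> set bound"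
proof -
  have vx: "a \<in> set ls \<Longrightarrow> vX a \<in> set bound" for a by (simp add: bound_def)
  have vq: "K \<in> set qs \<Longrightarrow> vQ K \<in> set bound" for K by (simp add: bound_def)
  have p1: "free_vars (sub TU (unT (map XT ls))) \<subseteq> V \<union> set bound" using vx by (auto simp: XT_def)
  have p2: "free_vars (sub (TMax TU) (unT (map QT (filter (\<lambda>K. [] \<in> K) qs)))) \<subseteq> V \<union> set bound"
    using vq by (auto simp: QT_def)
  have p3: "\<forall>a\<in>set ls. \<forall>y\<in>set xs. free_vars (if y \<in> snd a then sub (XT a) (TVar y) else dis (XT a) (TVar y)) \<subseteq> V \<union> set bound"
    using vx xs by (auto simp: XT_def)
  have p4: "\<forall>a\<in>set ls. free_vars (if fst a then sub (XT a) TC0 else dis (XT a) TC0) \<subseteq> V \<union> set bound"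
    using vx by (auto simp: XT_def)
  have p5: "\<forall>K\<in>set qs. \<forall>K'\<in>set (filter (\<lambda>K'. K' \<noteq> K) qs). free_vars (dis (QT K) (QT K')) \<subseteq> V \<union> set bound"
    using vq by (auto simp: QT_def)
  have p6: "\<forall>a\<in>set ls. free_vars (sub (TInt (TMin TU) (XT a)) (QT (quot [a] L))) \<subseteq> V \<union> set bound"
    using vx vq quotL_in by (auto simp: XT_def QT_def)
  have p7: "\<forall>K\<in>set qs. \<forall>a\<in>set ls. free_vars (sub (TInt (TIps TU (XT a)) (QT K)) (TIps TU (QT (quot [a] K)))) \<subseteq> V \<union> set bound"
    using vx vq quotK_in by (auto simp: XT_def QT_def)
  show ?thesis
    unfolding conds_def set_append ball_Un ball_concat_map ball_map
    using p1 p2 p3 p4 p5 p6 p7 by simp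
qed

lemma fv_psi: "free_vars psi \<subseteq> V"
proof -
  have "free_vars run \<subseteq> V" unfolding run_def using fv_conds by (simp add: UN_subset_iff Diff_subset_conv Un_commute)
  thus ?thesis unfolding psi_def by (auto simp: fv_nonempty)
qed

end



context enc begin

lemma sound:
  fixes \<sigma> \<tau> :: "nat \<Rightarrow> 'a::{linorder,order_bot} set"
  assumes f: "fin \<sigma>" and ne: "Uset V \<sigma> \<noteq> {}" and fV: "finite V"
    and agree: "\<forall>y\<in>V. \<tau> y = \<sigma> y" and C: "Cond \<tau>"
  shows "word V \<sigma> \<in> L"
proof -
  let ?U = "Uset V \<sigma>"
  have UT: "Uset V \<tau> = ?U" using agree by (auto simp: Uset_def)
  have C': "Cond \<tau>" by (rule C)
  note Cd = C'[unfolded Cond_def UT]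
  have H2: "?U \<subseteq> (\<Union>a\<in>set ls. \<tau> (vX a))" using conjunct1[OF Cd] .
  have H10: "set_max ?U \<subseteq> (\<Union>K\<in>{K\<in>set qs. [] \<in> K}. \<tau> (vQ K))" using conjunct1[OF conjunct2[OF Cd]] .
  have H3: "\<forall>a\<in>set ls. \<forall>y\<in>V. (y \<in> snd a \<longrightarrow> \<tau> (vX a) \<subseteq> \<tau> y) \<and> (y \<notin> snd a \<longrightarrow> \<tau> (vX a) \<inter> \<tau> y = {})" using conjunct1[OF conjunct2[OF conjunct2[OF Cd]]] .
  have H4: "\<forall>a\<in>set ls. (fst a \<longrightarrow> \<tau> (vX a) \<subseteq> {bot}) \<and> (\<not> fst a \<longrightarrow> bot \<notin> \<tau> (vX a))" using conjunct1[OF conjunct2[OF conjunct2[OF conjunct2[OF Cd]]]] .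
  have H7: "\<forall>K\<in>set qs. \<forall>K'\<in>set qs. K' \<noteq> K \<longrightarrow> \<tau> (vQ K) \<inter> \<tau> (vQ K') = {}" using conjunct1[OF conjunct2[OF conjunct2[OF conjunct2[OF conjunct2[OF Cd]]]]] .
  have H8: "\<forall>a\<in>set ls. set_min ?U \<inter> \<tau> (vX a) \<subseteq> \<tau> (vQ (quot [a] L))" using conjunct1[OF conjunct2[OF conjunct2[OF conjunct2[OF conjunct2[OF conjunct2[OF Cd]]]]]] .
  have H9: "\<forall>K\<in>set qs. \<forall>a\<in>set ls. ips ?U (\<tau> (vX a)) \<inter> \<tau> (vQ K) \<subseteq> ips ?U (\<tau> (vQ (quot [a] K)))" using conjunct2[OF conjunct2[OF conjunct2[OF conjunct2[OF conjunct2[OF conjunct2[OF Cd]]]]]] .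
  define ps where "ps = sorted_list_of_set ?U"
  have fU: "finite ?U" using finite_Uset[OF fV f] .
  have s: "sorted_wrt (<) ps" and sp: "set ps = ?U" using fU by (auto simp: ps_def)
  have pne: "ps \<noteq> []" using sp ne by auto
  define w where "w = word V \<sigma>"
  have w: "w = map (lett V \<sigma>) ps" by (simp add: w_def word_def ps_def)
  have lw: "length w = length ps" using w by simp
  have letter: "lett V \<sigma> p \<in> set ls \<and> p \<in> \<tau> (vX (lett V \<sigma> p))" if pU: "p \<in> ?U" for p
  proof -
    obtain a where a: "a \<in> set ls" "p \<in> \<tau> (vX a)" using H2 pU by blast
    have g: "good V a" using a(1) ls by simp
    have "fst a \<longleftrightarrow> p = bot" using H4 a by blast
    moreover have "snd a = {y\<in>V. p \<in> \<sigma> y}"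
    proof (rule set_eqI)
      fix y
      show "y \<in> snd a \<longleftrightarrow> y \<in> {y\<in>V. p \<in> \<sigma> y}"
      proof (cases "y \<in> V")
        case True
        then show ?thesis using H3 a agree by (cases "y \<in> snd a") auto
      next
        case False
        then show ?thesis using g by (auto simp: good_def)
      qed
    qed
    ultimately have "a = lett V \<sigma> p" by (simp add: lett_def prod_eq_iff)
    thus ?thesis using a by simp
  qed
  have wk: "k < length ps \<Longrightarrow> w ! k = lett V \<sigma> (ps ! k)" for k using w by simp
  have inU: "k < length ps \<Longrightarrow> ps ! k \<in> ?U" for k using sp nth_mem by blast
  have qin: "quot u L \<in> set qs" for u using qs by simp
  have runk: "k < length ps \<Longrightarrow> ps ! k \<in> \<tau> (vQ (quot (take (Suc k) w) L))" for k
  proof (induction k)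
    case 0
    have "set_min ?U = {ps ! 0}" using set_min_list[OF s pne] sp by simp
    moreover have "ps ! 0 \<in> \<tau> (vX (w ! 0))" "w ! 0 \<in> set ls" using letter[OF inU[OF 0]] wk[OF 0] by auto
    ultimately have "ps ! 0 \<in> \<tau> (vQ (quot [w ! 0] L))" using H8 by blast
    moreover have "take (Suc 0) w = [w ! 0]" using 0 lw by (cases w) auto
    ultimately show ?case by simp
  next
    case (Suc k)
    let ?K = "quot (take (Suc k) w) L"
    let ?a = "w ! Suc k"
    have IH: "ps ! k \<in> \<tau> (vQ ?K)" using Suc by simp
    have la: "?a \<in> set ls" "ps ! Suc k \<in> \<tau> (vX ?a)" using letter[OF inU[OF Suc.prems]] wk[OF Suc.prems] by auto
    have "ps ! k \<in> ips (set ps) (\<tau> (vX ?a))" using ips_nth[OF s, of k] Suc.prems la(2) by simp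
    hence m1: "ps ! k \<in> ips ?U (\<tau> (vX ?a)) \<inter> \<tau> (vQ ?K)" using IH sp by simp
    have h: "ips ?U (\<tau> (vX ?a)) \<inter> \<tau> (vQ ?K) \<subseteq> ips ?U (\<tau> (vQ (quot [?a] ?K)))"
      using H9 qin[of "take (Suc k) w"] la(1) by blast
    have "ps ! k \<in> ips ?U (\<tau> (vQ (quot [?a] ?K)))" using m1 h by (rule subsetD[rotated])
    hence "ps ! Suc k \<in> \<tau> (vQ (quot [?a] ?K))" using ips_nth[OF s, of k] Suc.prems sp by simp
    moreover have "take (Suc (Suc k)) w = take (Suc k) w @ [?a]" using Suc.prems lw by (simp add: take_Suc_conv_app_nth)
    ultimately show ?case by (simp add: quot_append)
  qed
  let ?n = "length ps - 1"
  have nl: "?n < length ps" using pne by simp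
  have "set_max ?U = {ps ! ?n}" using set_max_list[OF s pne] sp by simp
  then obtain K where K: "K \<in> set qs" "[] \<in> K" "ps ! ?n \<in> \<tau> (vQ K)" using H10 by blast
  have "take (Suc ?n) w = w" using lw pne by simp
  hence last: "ps ! ?n \<in> \<tau> (vQ (quot w L))" using runk[OF nl] by simp
  have "K = quot w L"
  proof (rule ccontr)
    assume "K \<noteq> quot w L"
    hence "\<tau> (vQ (quot w L)) \<inter> \<tau> (vQ K) = {}" using H7 K(1) qin[of w] by blast
    thus False using K(3) last by blast
  qed
  hence "[] \<in> quot w L" using K(2) by simp
  thus ?thesis by (simp add: quot_def w_def)
qed

lemma complete:
  fixes \<sigma> :: "nat \<Rightarrow> 'a::{linorder,order_bot} set"
  assumes f: "fin \<sigma>" and ne: "Uset V \<sigma> \<noteq> {}" and fV: "finite V" and wL: "word V \<sigma> \<in> L"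
  shows "\<exists>\<tau>. (\<forall>n\<in>set bound. finite (\<tau> n)) \<and> (\<forall>n. n \<notin> set bound \<longrightarrow> \<tau> n = \<sigma> n) \<and> Cond \<tau>"
proof -
  let ?U = "Uset V \<sigma>"
  define ps where "ps = sorted_list_of_set ?U"
  have fU: "finite ?U" using finite_Uset[OF fV f] .
  have s: "sorted_wrt (<) ps" and sp: "set ps = ?U" using fU by (auto simp: ps_def)
  have dist: "distinct ps" using s strict_sorted_iff by blast
  have pne: "ps \<noteq> []" using sp ne by auto
  define w where "w = word V \<sigma>"
  have w: "w = map (lett V \<sigma>) ps" by (simp add: w_def word_def ps_def)
  have lw: "length w = length ps" using w by simp
  have wk: "k < length ps \<Longrightarrow> w ! k = lett V \<sigma> (ps ! k)" for k using w by simp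
  have idx: "k < length ps \<Longrightarrow> j < length ps \<Longrightarrow> ps ! k = ps ! j \<Longrightarrow> k = j" for k j
    using dist nth_eq_iff_index_eq by blast
  have inU: "k < length ps \<Longrightarrow> ps ! k \<in> ?U" for k using sp nth_mem by blast
  have exk: "p \<in> ?U \<Longrightarrow> \<exists>k<length ps. ps ! k = p" for p using sp by (metis in_set_conv_nth)
  have qin: "quot u L \<in> set qs" for u using qs by simp
  have lin: "p \<in> ?U \<Longrightarrow> lett V \<sigma> p \<in> set ls" for p
    using ls by (auto simp: good_def lett_def Uset_def)
  define st where "st k = quot (take (Suc k) w) L" for k
  define Xs where "Xs a = {ps ! k | k. k < length ps \<and> w ! k = a}" for a
  define Qs where "Qs K = {ps ! k | k. k < length ps \<and> st k = K}" for K
  have Xk: "k < length ps \<Longrightarrow> ps ! k \<in> Xs a \<longleftrightarrow> w ! k = a" for k a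
    unfolding Xs_def using idx by blast
  have Qk: "k < length ps \<Longrightarrow> ps ! k \<in> Qs K \<longleftrightarrow> st k = K" for k K
    unfolding Qs_def using idx by blast
  have Xsub: "Xs a \<subseteq> set ps" for a unfolding Xs_def by auto
  have Qsub: "Qs K \<subseteq> set ps" for K unfolding Qs_def by auto
  have injX: "inj_on vX (set ls)" using eX by (auto simp: inj_on_def vX_def)
  have injQ: "inj_on vQ (set qs)" using eQ by (auto simp: inj_on_def vQ_def)
  have XQ: "vX a \<noteq> vQ K" for a K by (simp add: vX_def vQ_def) presburger
  define \<tau> where "\<tau> m = (if m \<in> vX ` set ls then Xs (inv_into (set ls) vX m)
     else if m \<in> vQ ` set qs then Qs (inv_into (set qs) vQ m) else \<sigma> m)" for m
  have tX: "a \<in> set ls \<Longrightarrow> \<tau> (vX a) = Xs a" for a using injX by (simp add: \<tau>_def)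
  have tQ: "K \<in> set qs \<Longrightarrow> \<tau> (vQ K) = Qs K" for K
  proof -
    assume K: "K \<in> set qs"
    have "vQ K \<noteq> vX a" for a using XQ[of a K] by simp
    hence "vQ K \<notin> vX ` set ls" by blast
    thus ?thesis using injQ K by (simp add: \<tau>_def)
  qed
  have tV: "y \<in> V \<Longrightarrow> \<tau> y = \<sigma> y" for y
  proof -
    assume "y \<in> V"
    hence "y < N" using V_lt by blast
    hence "y \<notin> vX ` set ls" "y \<notin> vQ ` set qs" by (auto simp: vX_def vQ_def)
    thus ?thesis by (simp add: \<tau>_def)
  qed
  have sb: "set bound = vX ` set ls \<union> vQ ` set qs" by (simp add: bound_def)
  have fin1: "\<forall>n\<in>set bound. finite (\<tau> n)"
  proof
    fix n assume "n \<in> set bound"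
    then consider a where "a \<in> set ls" "n = vX a" | K where "K \<in> set qs" "n = vQ K" using sb by auto
    thus "finite (\<tau> n)"
    proof cases
      case 1 thus ?thesis using tX Xsub finite_subset by (metis List.finite_set)
    next
      case 2 thus ?thesis using tQ Qsub finite_subset by (metis List.finite_set)
    qed
  qed
  have agr: "\<forall>n. n \<notin> set bound \<longrightarrow> \<tau> n = \<sigma> n" using sb by (auto simp: \<tau>_def)
  have UT: "Uset V \<tau> = ?U" using tV by (auto simp: Uset_def)
  let ?n = "length ps - 1"
  have nl: "?n < length ps" using pne by simp
  have st_suc: "Suc k < length ps \<Longrightarrow> st (Suc k) = quot [w ! Suc k] (st k)" for k
  proof -
    assume "Suc k < length ps"
    hence "take (Suc (Suc k)) w = take (Suc k) w @ [w ! Suc k]" using lw by (simp add: take_Suc_conv_app_nth)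
    thus ?thesis unfolding st_def by (simp only: quot_append)
  qed
  have st0: "st 0 = quot [w ! 0] L" unfolding st_def using pne lw by (cases w) auto
  have stn: "st ?n = quot w L" unfolding st_def using pne lw by simp
  have H2: "?U \<subseteq> (\<Union>a\<in>set ls. \<tau> (vX a))"
  proof
    fix p assume p: "p \<in> ?U"
    then obtain k where k: "k < length ps" "ps ! k = p" using exk by blast
    have "w ! k \<in> set ls" using lin p wk k by simp
    moreover have "p \<in> \<tau> (vX (w ! k))" using tX[OF calculation] Xk[OF k(1), of "w ! k"] k(2) by simp
    ultimately show "p \<in> (\<Union>a\<in>set ls. \<tau> (vX a))" by blast
  qed
  have H10: "set_max ?U \<subseteq> (\<Union>K\<in>{K\<in>set qs. [] \<in> K}. \<tau> (vQ K))"
  proof -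
    have "set_max ?U = {ps ! ?n}" using set_max_list[OF s pne] sp by simp
    moreover have "[] \<in> quot w L" using wL by (simp add: quot_def w_def)
    moreover have "ps ! ?n \<in> \<tau> (vQ (quot w L))" using tQ[OF qin] Qk[OF nl] stn by simp
    ultimately have "set_max ?U \<subseteq> \<tau> (vQ (quot w L))" "quot w L \<in> {K\<in>set qs. [] \<in> K}"
      using qin[of w] by auto
    thus ?thesis by (intro subset_trans[OF _ UN_upper])
  qed
  have H3: "\<forall>a\<in>set ls. \<forall>y\<in>V. (y \<in> snd a \<longrightarrow> \<tau> (vX a) \<subseteq> \<tau> y) \<and> (y \<notin> snd a \<longrightarrow> \<tau> (vX a) \<inter> \<tau> y = {})"
  proof (intro ballI conjI impI)
    fix a y assume a: "a \<in> set ls" and y: "y \<in> V"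
    have m: "p \<in> \<tau> (vX a) \<Longrightarrow> (y \<in> snd a \<longleftrightarrow> p \<in> \<tau> y)" for p
    proof -
      assume "p \<in> \<tau> (vX a)"
      then obtain k where k: "k < length ps" "p = ps ! k" "w ! k = a" using tX[OF a] by (auto simp: Xs_def)
      hence "a = lett V \<sigma> p" using wk[OF k(1)] by simp
      thus ?thesis using tV[OF y] y by (simp add: lett_def)
    qed
    show "y \<in> snd a \<Longrightarrow> \<tau> (vX a) \<subseteq> \<tau> y" using m by blast
    show "y \<notin> snd a \<Longrightarrow> \<tau> (vX a) \<inter> \<tau> y = {}" using m by blast
  qed
  have H4: "\<forall>a\<in>set ls. (fst a \<longrightarrow> \<tau> (vX a) \<subseteq> {bot}) \<and> (\<not> fst a \<longrightarrow> bot \<notin> \<tau> (vX a))"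
  proof (intro ballI conjI impI)
    fix a assume a: "a \<in> set ls"
    have m: "p \<in> \<tau> (vX a) \<Longrightarrow> (fst a \<longleftrightarrow> p = bot)" for p
    proof -
      assume "p \<in> \<tau> (vX a)"
      then obtain k where k: "k < length ps" "p = ps ! k" "w ! k = a" using tX[OF a] by (auto simp: Xs_def)
      hence "a = lett V \<sigma> p" using wk[OF k(1)] by simp
      thus ?thesis by (simp add: lett_def)
    qed
    show "fst a \<Longrightarrow> \<tau> (vX a) \<subseteq> {bot}" using m by blast
    show "\<not> fst a \<Longrightarrow> bot \<notin> \<tau> (vX a)" using m by blast
  qed
  have H7: "\<forall>K\<in>set qs. \<forall>K'\<in>set qs. K' \<noteq> K \<longrightarrow> \<tau> (vQ K) \<inter> \<tau> (vQ K') = {}"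
  proof (intro ballI impI)
    fix K K' assume K: "K \<in> set qs" "K' \<in> set qs" "K' \<noteq> K"
    show "\<tau> (vQ K) \<inter> \<tau> (vQ K') = {}"
    proof (rule ccontr)
      assume "\<tau> (vQ K) \<inter> \<tau> (vQ K') \<noteq> {}"
      then obtain p where "p \<in> Qs K" "p \<in> Qs K'" using tQ K by auto
      hence "p \<in> set ps" using Qsub by blast
      then obtain k where k: "k < length ps" "p = ps ! k" by (auto simp: in_set_conv_nth)
      thus False using Qk \<open>p \<in> Qs K\<close> \<open>p \<in> Qs K'\<close> K(3) by blast
    qed
  qed
  have H8: "\<forall>a\<in>set ls. set_min ?U \<inter> \<tau> (vX a) \<subseteq> \<tau> (vQ (quot [a] L))"
  proof (intro ballI subsetI)
    fix a p assume a: "a \<in> set ls" and p: "p \<in> set_min ?U \<inter> \<tau> (vX a)"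
    have "set_min ?U = {ps ! 0}" using set_min_list[OF s pne] sp by simp
    hence "p = ps ! 0" using p by simp
    hence "w ! 0 = a" using p tX[OF a] Xk[of 0 a] pne by simp
    hence "p \<in> Qs (quot [a] L)" using Qk[of 0] pne st0 \<open>p = ps ! 0\<close> by simp
    thus "p \<in> \<tau> (vQ (quot [a] L))" using tQ[OF qin[of "[a]"]] by (simp add: quot_append[symmetric])
  qed
  have H9: "\<forall>K\<in>set qs. \<forall>a\<in>set ls. ips ?U (\<tau> (vX a)) \<inter> \<tau> (vQ K) \<subseteq> ips ?U (\<tau> (vQ (quot [a] K)))"
  proof (intro ballI subsetI)
    fix K a p assume K: "K \<in> set qs" and a: "a \<in> set ls" and p: "p \<in> ips ?U (\<tau> (vX a)) \<inter> \<tau> (vQ K)"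
    have "p \<in> ?U" using p ips_sub by blast
    then obtain k where k: "k < length ps" "ps ! k = p" using exk by blast
    have "Suc k < length ps" "ps ! Suc k \<in> Xs a" using p ips_nth[OF s k(1)] tX[OF a] k(2) sp by auto
    hence wa: "w ! Suc k = a" using Xk by blast
    have "st k = K" using p tQ[OF K] Qk k by auto
    hence "st (Suc k) = quot [a] K" using st_suc[OF \<open>Suc k < length ps\<close>] wa by simp
    hence "ps ! Suc k \<in> \<tau> (vQ (quot [a] K))" using tQ[OF quotK_in[OF K]] Qk[OF \<open>Suc k < length ps\<close>] by simp
    thus "p \<in> ips ?U (\<tau> (vQ (quot [a] K)))" using ips_nth[OF s k(1)] \<open>Suc k < length ps\<close> k(2) sp by auto
  qed
  have "Cond \<tau>" unfolding Cond_def UT by (intro conjI H2 H10 H3 H4 H7 H8 H9)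
  thus ?thesis using fin1 agr by blast
qed

end



lemma Reg_to_pos:
  fixes P :: "(nat \<Rightarrow> 'a::{linorder,order_bot} set) \<Rightarrow> bool"
  assumes R: "Reg V P"
  shows "\<exists>\<psi>. pos_ex \<psi> \<and> free_vars \<psi> \<subseteq> V \<and> (\<forall>\<sigma>. fin \<sigma> \<longrightarrow> (P \<sigma> \<longleftrightarrow> holds \<sigma> \<psi>))"
proof -
  obtain L where L: "finite V" "regular L" "\<And>\<sigma>. fin \<sigma> \<Longrightarrow> P \<sigma> \<longleftrightarrow> word V \<sigma> \<in> L"
    using R Reg_def by metis
  have fl: "finite {a. good V a}"
  proof (rule finite_subset)
    show "{a. good V a} \<subseteq> UNIV \<times> Pow V" by (auto simp: good_def)
    show "finite (UNIV \<times> Pow V :: letter set)" using L(1) by simp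
  qed
  obtain ls where ls: "set ls = {a. good V a}" using finite_list[OF fl] by (elim exE)
  have fq: "finite (range (\<lambda>u. quot u L))" using L(2) unfolding regular_def .
  obtain qs where qs: "set qs = range (\<lambda>u. quot u L)" using finite_list[OF fq] by (elim exE)
  obtain xs where xs: "set xs = V" using finite_list[OF L(1)] by (elim exE)
  obtain eX :: "letter \<Rightarrow> nat" and m1 where eX: "inj_on eX (set ls)" using finite_imp_inj_to_nat_seg[of "set ls"] by auto
  obtain eQ :: "letter list set \<Rightarrow> nat" where eQ: "inj_on eQ (set qs)" using finite_imp_inj_to_nat_seg[of "set qs"] by auto
  have "\<forall>v\<in>V. v < Suc (Max (insert 0 V))"
    using L(1) Max_ge[of "insert 0 V"] by (auto simp: le_imp_less_Suc)
  then obtain N where N: "\<forall>v\<in>V. v < N" by blast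
  interpret e: enc V L N eX eQ ls qs xs
    using N ls qs xs eX eQ by unfold_locales auto
  have disj: "v \<in> V \<Longrightarrow> v \<notin> set e.bound" for v
    using N by (auto simp: e.bound_def e.vX_def e.vQ_def)
  show ?thesis
  proof (intro exI conjI allI impI)
    show "pos_ex e.psi" by (rule e.pos_psi)
    show "free_vars e.psi \<subseteq> V" by (rule e.fv_psi)
    fix \<sigma> :: "nat \<Rightarrow> 'a set" assume f: "fin \<sigma>"
    have fU: "finite (Uset V \<sigma>)" using finite_Uset[OF L(1) f] .
    have ne: "holds \<sigma> (nonempty e.TU) \<longleftrightarrow> Uset V \<sigma> \<noteq> {}"
      using holds_nonempty[of \<sigma> e.TU] fU by simp
    have run: "holds \<sigma> e.run \<longleftrightarrow> (\<exists>\<tau>. (\<forall>n\<in>set e.bound. finite (\<tau> n)) \<and> (\<forall>n. n \<notin> set e.bound \<longrightarrow> \<tau> n = \<sigma> n) \<and> e.Cond \<tau>)"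
      unfolding e.run_def holds_exL e.holds_conds ..
    have hp: "holds \<sigma> e.psi \<longleftrightarrow> (Uset V \<sigma> \<noteq> {} \<and> holds \<sigma> e.run) \<or> (Uset V \<sigma> = {} \<and> [] \<in> L)"
      unfolding e.psi_def using ne by auto
    show "P \<sigma> \<longleftrightarrow> holds \<sigma> e.psi"
    proof (cases "Uset V \<sigma> = {}")
      case True
      hence "word V \<sigma> = []" by (simp add: word_def)
      thus ?thesis using L(3)[OF f] hp True by simp
    next
      case False
      have "word V \<sigma> \<in> L \<longleftrightarrow> holds \<sigma> e.run"
      proof
        assume "word V \<sigma> \<in> L"
        thus "holds \<sigma> e.run" using e.complete[OF f False L(1)] run by blast
      next
        assume "holds \<sigma> e.run"
        then obtain \<tau> where t: "\<forall>n. n \<notin> set e.bound \<longrightarrow> \<tau> n = \<sigma> n" "e.Cond \<tau>" using run by blast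
        have "\<forall>y\<in>V. \<tau> y = \<sigma> y" using t(1) disj by blast
        thus "word V \<sigma> \<in> L" using e.sound[OF f False L(1) _ t(2)] by blast
      qed
      thus ?thesis using L(3)[OF f] hp False by simp
    qed
  qed
qed

theorem theorem3p6:
  fixes I_type :: "'a::{dense_linorder, no_top, order_bot} itself"
  shows "\<forall>\<phi>. \<exists>\<psi>. pos_ex \<psi> \<and> free_vars \<psi> \<subseteq> free_vars \<phi> \<and>
           (\<forall>\<sigma> :: nat \<Rightarrow> 'a set. (\<forall>n. finite (\<sigma> n)) \<longrightarrow> (holds \<sigma> \<phi> \<longleftrightarrow> holds \<sigma> \<psi>))"
proof
  fix \<phi>
  have "Reg (free_vars \<phi>) (\<lambda>\<sigma>::nat \<Rightarrow> 'a set. holds \<sigma> \<phi>)" by (rule Reg_fm)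
  from Reg_to_pos[OF this] show "\<exists>\<psi>. pos_ex \<psi> \<and> free_vars \<psi> \<subseteq> free_vars \<phi> \<and>
           (\<forall>\<sigma> :: nat \<Rightarrow> 'a set. (\<forall>n. finite (\<sigma> n)) \<longrightarrow> (holds \<sigma> \<phi> \<longleftrightarrow> holds \<sigma> \<psi>))"
    by (simp add: fin_def)
qed


end
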